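(* Consider a cluster-randomized trial with i.i.d. clusters $i=1,\dots,K$, satisfying the super-population, consistency, cluster-randomization, monotonicity (standard or strong), extended principal ignorability and positivity assumptions stated in the context. Let $g$ be a principal stratum and $(a,a^* )$ a pair for which $\theta_g(a,a^* )$ is defined (see context). Then $\theta_g(a,a^* )$ is nonparametrically identified as $$ \theta_g(a,a^* )=\frac{\mathbb{E}\left[\frac{W}{N}\sum_{j=1}^{N} e_{\bullet j}(g,\bm C)\,\mu_{\bullet j}(a,d^*,\bm C)\right]}{\mathbb{E}\left[\frac{W}{N}\sum_{j=1}^{N} e_{\bullet j}(g,\bm C)\right]}, $$ where $\mu_{\bullet j}(a,d,\bm C)=\mathbb{E}[Y_{\bullet j}\mid A=a,D_{\bullet j}=d,\bm C]$, $d^*=1$ if $g=\texttt{at}$, $d^*=a^*$ if $g=\texttt{co}$, $d^*=0$ if $g=\texttt{nt}$, and the principal score $e_{\bullet j}(g,\bm C)=\mathbb{P}(G_{\bullet j}=g\mid \bm C)$ is identified by $e_{\bullet j}(\texttt{at},\bm C)=p_{\bullet j}(0,1,\bm C)$, $e_{\bullet j}(\texttt{co},\bm C)=p_{\bullet j}(1,1,\bm C)-p_{\bullet j}(0,1,\bm C)$, $e_{\bullet j}(\texttt{nt},\bm C)=p_{\bullet j}(1,0,\bm C)$, with $p_{\bullet j}(a,d,\bm C)=\mathbb{P}(D_{\bullet j}=d\mid A=a,\bm C)$.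
   Context: Data: each cluster $i$ has a random size $N_i$, cluster-level covariates $\bm V_i$, individual covariates $\bm X_i=(\bm X_{i1},\dots,\bm X_{iN_i})$, a cluster-level treatment assignment $A_i\in\{0,1\}$, individual treatment uptake $D_{ij}\in\{0,1\}$ and outcome $Y_{ij}\in\mathbb{R}$, $j=1,\dots,N_i$; $\bm D_i=(D_{i1},\dots,D_{iN_i})$ and $\bm D_{i(-j)}$ is $\bm D_i$ with the $j$-th entry removed; $\bm C_i=(\bm X_i,\bm V_i,N_i)$. Potential variables: $D_{ij}(a)$ is the uptake if the cluster is assigned $a$; $Y_{ij}(a,\bm d_i)=Y_{ij}(a,d_{ij},\bm d_{i(-j)})$ is the outcome if the cluster is assigned $a$ and uptakes of the cluster are set to $\bm d_i\in\{0,1\}^{N_i}$; $Y_{ij}(a)=Y_{ij}(a,D_{ij}(a),\bm D_{i(-j)}(a))$ (no cross-cluster interference). Let $\mathcal U_i$ collect $\bm V_i,\bm X_i,\bm D_i(1),\bm D_i(0)$ and all $\bm Y_i(a,\bm d_i)$. Principal stratum $G_{ij}=(D_{ij}(1),D_{ij}(0))$: $\texttt{at}=(1,1)$, $\texttt{co}=(1,0)$, $\texttt{nt}=(0,0)$, $\texttt{de}=(0,1)$. A subscript $\bullet$ and omission of $i$ denote a generic cluster; expectations are over the super population. $W$ is a user-specified cluster weight that is a known function of $N$ and $\bm V$ (e.g. $W=1$ or $W=N$). Estimand: $\theta_g(a,a^* )=\mathbb{E}\big[\frac{W}{N}\sum_{j=1}^N \mathbb{I}(G_{\bullet j}=g)Y_{\bullet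 j}(a,D_{\bullet j}(a^* ),\bm D_{\bullet(-j)}(a))\big]/\mathbb{E}\big[\frac{W}{N}\sum_{j=1}^N \mathbb{I}(G_{\bullet j}=g)\big]$, defined for $g\in\{\texttt{at},\texttt{co},\texttt{nt}\}$ under standard monotonicity or $g\in\{\texttt{co},\texttt{nt}\}$ under strong monotonicity, with $(a,a^* )\in\{(1,1),(1,0),(0,0)\}$ if $g=\texttt{co}$ and $(a,a^* )\in\{(1,0),(0,0)\}$ if $g\in\{\texttt{at},\texttt{nt}\}$. Assumptions: (Super population) $N_i$ has an unknown distribution with finite support in the positive integers; given $N_i$, $(\mathcal U_i,A_i)$ has joint law $\mathbb{P}_{\mathcal U_i\mid N_i}\times\mathbb{P}_{A_i}$, with $\mathbb{P}_{\mathcal U_i\mid N_i}$ having finite second moments; clusters are i.i.d. (Consistency) If $A_i=a$ then $Y_{ij}(a)=Y_{ij}$ and $D_{ij}(a)=D_{ij}$; if $A_i=a$ and $\bm D_i=\bm d_i$ then $Y_{ij}(a,\bm d_i)=Y_{ij}$. (Cluster randomization) $A_1,\dots,A_K$ are i.i.d. Bernoulli$(\pi)$ with known $\pi\in(0,1)$, independent of all potential variables and covariates. (Monotonicity) either (a) standard: $D_{ij}(1)\ge D_{ij}(0)$, or (b) strong: $D_{ij}(0)=0$. (Extended principal ignorability) for all $a,a^*\in\{0,1\}$, $Y_{ij}(a,D_{ij}(a^* ),\bm D_{i(-j)}(a))\perp G_{ij}\mid \bm C_i$. (Positivity) $\mathbb{P}(D_{ij}=d\mid A_i=1,\bm C_i)>0$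 for $d\in\{0,1\}$ and $\mathbb{P}(D_{ij}=0\mid A_i=0,\bm C_i)>0$; under standard monotonicity additionally $0<\mathbb{P}(D_{ij}=1\mid A_i=0,\bm C_i)<1$. *)

theory Defs
  imports "HOL-Probability.Probability"
begin

datatype stratum = At | Co | Nt | De

definition stratum_of :: "bool \<Rightarrow> bool \<Rightarrow> stratum" where
  "stratum_of d1 d0 = (if d1 then (if d0 then At else Co) else (if d0 then De else Nt))"

definition cond_indep ::
  "'w measure \<Rightarrow> 'w measure \<Rightarrow> ('w \<Rightarrow> 'b) \<Rightarrow> 'b measure \<Rightarrow> ('w \<Rightarrow> 'c) \<Rightarrow> 'c measure \<Rightarrow> bool" where
  "cond_indep M F X MX Z MZ \<longleftrightarrow>
     (\<forall>B\<in>sets MX. \<forall>E\<in>sets MZ.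
        AE \<omega> in M.
          real_cond_exp M F (\<lambda>\<omega>. (if X \<omega> \<in> B then 1 else 0) * (if Z \<omega> \<in> E then 1 else 0)) \<omega>
          = real_cond_exp M F (\<lambda>\<omega>. if X \<omega> \<in> B then 1 else 0) \<omega>
            * real_cond_exp M F (\<lambda>\<omega>. if Z \<omega> \<in> E then 1 else 0) \<omega>)"

text \<open>Independence of two random variables with possibly different value types
  (the library's indep_var requires equal types; this is its characterisation indep_var_eq).\<close>
definition indep_rv :: "'w measure \<Rightarrow> 'b measure \<Rightarrow> ('w \<Rightarrow> 'b) \<Rightarrow> 'c measure \<Rightarrow> ('w \<Rightarrow> 'c) \<Rightarrow> bool" where
  "indep_rv M MX X MY Y \<longleftrightarrow>
     X \<in> measurable M MX \<and> Y \<in> measurable M MY \<and>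
     prob_space.indep_set M
       (sigma_sets (space M) {X -` S \<inter> space M | S. S \<in> sets MX})
       (sigma_sets (space M) {Y -` S \<inter> space M | S. S \<in> sets MY})"

text \<open>Admissible (stratum, a, a*) triples for which theta_g(a,a*) is defined;
  strong = True means strong monotonicity, False standard monotonicity.\<close>
definition admissible :: "bool \<Rightarrow> stratum \<Rightarrow> bool \<Rightarrow> bool \<Rightarrow> bool" where
  "admissible strong g a astar \<longleftrightarrow>
     (g \<in> (if strong then {Co, Nt} else {At, Co, Nt})) \<and>
     (if g = Co then (a, astar) \<in> {(True, True), (True, False), (False, False)}
      else (a, astar) \<in> {(True, False), (False, False)})"

definition dstar :: "stratum \<Rightarrow> bool \<Rightarrow> bool" where
  "dstar g astar = (case g of At \<Rightarrow> True | Co \<Rightarrow> astar | Nt \<Rightarrow> False | De \<Rightarrow> False)"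

text \<open>Identified principal score, with p a j c a version of P(D_j = 1 | A = a, C = c),
  so that p_j(a,1,c) = p a j c and p_j(a,0,c) = 1 - p a j c.\<close>
definition escore :: "(bool \<Rightarrow> nat \<Rightarrow> 'c \<Rightarrow> real) \<Rightarrow> stratum \<Rightarrow> nat \<Rightarrow> 'c \<Rightarrow> real" where
  "escore p g j c = (case g of
       At \<Rightarrow> p False j c
     | Co \<Rightarrow> p True j c - p False j c
     | Nt \<Rightarrow> 1 - p True j c
     | De \<Rightarrow> 0)"

text \<open>Counterfactual outcome Y_j(a, D_j(a*), D_(-j)(a)) in a cluster of size n;
  Dp w a k is the potential uptake D_k(a), Yp w a j ds is Y_j(a, ds) for ds of length n.\<close>
definition cf_outcome ::
  "('w \<Rightarrow> bool \<Rightarrow> nat \<Rightarrow> bool) \<Rightarrow> ('w \<Rightarrow> bool \<Rightarrow> nat \<Rightarrow> bool list \<Rightarrow> real) \<Rightarrow> nat \<Rightarrow> bool \<Rightarrow> bool \<Rightarrow> 'w \<Rightarrow> nat \<Rightarrow> real" where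
  "cf_outcome Dp Yp n a astar \<omega> j = Yp \<omega> a j (map (\<lambda>k. if k = j then Dp \<omega> astar k else Dp \<omega> a k) [0..<n])"

end

theory Submission
  imports Defs
begin


lemma subalgebra_vimage:
  assumes "f \<in> measurable M N"
  shows "subalgebra M (vimage_algebra (space M) f N)"
  unfolding subalgebra_def
proof
  have "f \<in> space M \<rightarrow> space N" by (meson Pi_I measurable_space assms)
  then show "sets (vimage_algebra (space M) f N) \<subseteq> sets M"
    using assms by (auto simp: sets_vimage_algebra2 intro: measurable_sets)
qed simp

lemma (in prob_space) sfs_vimage:
  assumes "f \<in> measurable M N"
  shows "sigma_finite_subalgebra M (vimage_algebra (space M) f N)"
  apply (rule finite_measure_subalgebra_is_sigma_finite)
  unfolding finite_measure_subalgebra_def finite_measure_subalgebra_axioms_def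
  using subalgebra_vimage[OF assms] finite_measure_axioms by auto

lemma (in prob_space) indep_rv_integral:
  assumes ind: "indep_rv M (count_space UNIV) A MT T"
    and h: "h \<in> borel_measurable (vimage_algebra (space M) T MT)" and hi: "integrable M h"
  shows "(\<integral>\<omega>. indicator {\<omega>\<in>space M. A \<omega> = a} \<omega> * h \<omega> \<partial>M)
         = prob {\<omega>\<in>space M. A \<omega> = a} * (\<integral>\<omega>. h \<omega> \<partial>M)"
proof -
  have Am: "A \<in> measurable M (count_space UNIV)" and Tm: "T \<in> measurable M MT"
    and ind2: "indep_set (sigma_sets (space M) {A -` S \<inter> space M | S. S \<in> sets (count_space UNIV)})
       (sigma_sets (space M) {T -` S \<inter> space M | S. S \<in> sets MT})"
    using ind unfolding indep_rv_def by auto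
  define X :: "'a \<Rightarrow> real" where "X = indicator {\<omega>\<in>space M. A \<omega> = a}"
  have Aset: "{\<omega>\<in>space M. A \<omega> = a} \<in> events"
    using Am by measurable
  have Xm: "X \<in> borel_measurable M" unfolding X_def using Aset by simp
  have hm: "h \<in> borel_measurable M"
    using measurable_from_subalg[OF subalgebra_vimage[OF Tm] h] .
  have TS: "T \<in> space M \<rightarrow> space MT" by (meson Pi_I measurable_space Tm)
  have s1: "sigma_sets (space M) {X -` B \<inter> space M | B. B \<in> sets borel}
      \<subseteq> sigma_sets (space M) {A -` S \<inter> space M | S. S \<in> sets (count_space UNIV)}"
  proof (rule sigma_sets_mono')
    show "{X -` B \<inter> space M | B. B \<in> sets borel} \<subseteq> {A -` S \<inter> space M | S. S \<in> sets (count_space UNIV)}"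
    proof
      fix x assume "x \<in> {X -` B \<inter> space M | B. B \<in> sets borel}"
      then obtain B where x: "x = X -` B \<inter> space M" by auto
      have xe: "x = A -` {y. (if y = a then 1 else 0::real) \<in> B} \<inter> space M"
        unfolding x X_def by (auto simp: indicator_def)
      show "x \<in> {A -` S \<inter> space M | S. S \<in> sets (count_space UNIV)}"
        by (rule CollectI, rule exI[of _ "{y. (if y = a then 1 else 0::real) \<in> B}"]) (simp add: xe)
    qed
  qed
  have s2: "sigma_sets (space M) {h -` B \<inter> space M | B. B \<in> sets borel}
      \<subseteq> sigma_sets (space M) {T -` S \<inter> space M | S. S \<in> sets MT}"
  proof (rule sigma_sets_mono')
    show "{h -` B \<inter> space M | B. B \<in> sets borel} \<subseteq> {T -` S \<inter> space M | S. S \<in> sets MT}"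
    proof
      fix x assume "x \<in> {h -` B \<inter> space M | B. B \<in> sets borel}"
      then obtain B where x: "x = h -` B \<inter> space M" and B: "B \<in> sets borel" by auto
      have "x \<in> sets (vimage_algebra (space M) T MT)"
        using measurable_sets[OF h B] x by simp
      then show "x \<in> {T -` S \<inter> space M | S. S \<in> sets MT}"
        using sets_vimage_algebra2[OF TS] by simp
    qed
  qed
  have "indep_var borel X borel h"
    unfolding indep_var_eq
  proof (intro conjI)
    show "random_variable borel X" "random_variable borel h" using Xm hm by auto
    show "indep_set (sigma_sets (space M) {X -` A \<inter> space M |A. A \<in> sets borel})
       (sigma_sets (space M) {h -` A \<inter> space M |A. A \<in> sets borel})"
      using ind2 s1 s2 unfolding indep_sets2_eq by blast
  qed
  moreover have "integrable M X" unfolding X_def using Aset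
    by (intro integrable_real_indicator) (auto simp: emeasure_eq_measure)
  ultimately have "(\<integral>\<omega>. X \<omega> * h \<omega> \<partial>M) = (\<integral>\<omega>. X \<omega> \<partial>M) * (\<integral>\<omega>. h \<omega> \<partial>M)"
    using hi by (rule indep_var_lebesgue_integral)
  moreover have "(\<integral>\<omega>. X \<omega> \<partial>M) = prob {\<omega>\<in>space M. A \<omega> = a}"
    unfolding X_def by (simp add: Int_absorb2 subsetI)
  ultimately show ?thesis unfolding X_def by simp
qed

lemma (in prob_space) indep_rv_AE:
  assumes ind: "indep_rv M (count_space UNIV) A MT T"
    and P: "{\<omega>\<in>space M. P \<omega>} \<in> sets (vimage_algebra (space M) T MT)"
    and pos: "prob {\<omega>\<in>space M. A \<omega> = a} > 0"
    and ae: "AE \<omega> in M. A \<omega> = a \<longrightarrow> P \<omega>"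
  shows "AE \<omega> in M. P \<omega>"
proof -
  have Tm: "T \<in> measurable M MT" using ind unfolding indep_rv_def by auto
  have Am: "A \<in> measurable M (count_space UNIV)" using ind unfolding indep_rv_def by auto
  define Q where "Q = space M - {\<omega>\<in>space M. P \<omega>}"
  have Q: "Q \<in> sets (vimage_algebra (space M) T MT)"
    unfolding Q_def using sets.compl_sets[OF P] by simp
  have QM: "Q \<in> events" using Q subalgebra_vimage[OF Tm] unfolding subalgebra_def by auto
  have hm: "(indicator Q :: 'a \<Rightarrow> real) \<in> borel_measurable (vimage_algebra (space M) T MT)"
    using Q by simp
  have "(\<integral>\<omega>. indicator {\<omega>\<in>space M. A \<omega> = a} \<omega> * indicator Q \<omega> \<partial>M)
         = prob {\<omega>\<in>space M. A \<omega> = a} * (\<integral>\<omega>. indicator Q \<omega> \<partial>M)"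
    by (rule indep_rv_integral[OF ind hm]) (use QM in \<open>auto intro!: integrable_real_indicator simp: emeasure_eq_measure\<close>)
  moreover have "(\<integral>\<omega>. indicator {\<omega>\<in>space M. A \<omega> = a} \<omega> * indicator Q \<omega> \<partial>M) = (0::real)"
    apply (rule integral_eq_zero_AE)
    using ae by eventually_elim (auto simp: Q_def indicator_def)
  ultimately have "prob Q = 0" using pos QM by (simp add: Int_absorb2 sets.sets_into_space)
  then have "AE \<omega> in M. \<omega> \<notin> Q" using prob_eq_0[OF QM] by simp
  then show ?thesis using AE_space by eventually_elim (auto simp: Q_def)
qed



lemma (in prob_space) cexp_bounds01:
  assumes sf: "sigma_finite_subalgebra M F" and fm: "f \<in> borel_measurable M"
    and b: "AE x in M. 0 \<le> f x \<and> f x \<le> 1"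
  shows "AE x in M. 0 \<le> real_cond_exp M F f x \<and> real_cond_exp M F f x \<le> 1"
proof -
  interpret sigma_finite_subalgebra M F by (rule sf)
  have fi: "integrable M f"
    by (rule integrable_const_bound[where B=1]) (use b fm in auto)
  have "AE x in M. real_cond_exp M F f x \<ge> 0"
    by (rule real_cond_exp_ge_c[OF fi]) (use b in auto)
  moreover have "AE x in M. real_cond_exp M F f x \<le> 1"
    by (rule real_cond_exp_le_c[OF fi]) (use b in auto)
  ultimately show ?thesis by eventually_elim auto
qed

lemma (in prob_space) ci_ext:
  fixes X :: "'a \<Rightarrow> real"
  assumes sf: "sigma_finite_subalgebra M F"
    and ci: "cond_indep M F X borel Z MZ"
    and Xm: "X \<in> borel_measurable M" and Xi: "integrable M X"
    and Zm: "Z \<in> measurable M MZ" and E: "E \<in> sets MZ"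
  shows "AE \<omega> in M. real_cond_exp M F (\<lambda>\<omega>. X \<omega> * (if Z \<omega> \<in> E then 1 else 0)) \<omega>
           = real_cond_exp M F X \<omega> * real_cond_exp M F (\<lambda>\<omega>. if Z \<omega> \<in> E then 1 else 0) \<omega>"
proof -
  interpret sigma_finite_subalgebra M F by (rule sf)
  define zE :: "'a \<Rightarrow> real" where "zE = (\<lambda>\<omega>. if Z \<omega> \<in> E then 1 else 0)"
  define q where "q = real_cond_exp M F zE"
  have zEm[measurable]: "zE \<in> borel_measurable M"
    unfolding zE_def using Zm E by measurable
  have zEi: "integrable M zE"
    by (rule integrable_const_bound[where B=1]) (auto simp: zE_def intro: zEm[unfolded zE_def])
  have qm: "q \<in> borel_measurable F" "q \<in> borel_measurable M" unfolding q_def by auto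
  note qm(2)[measurable] Xm[measurable] Zm[measurable] E[measurable]
  have qAF: "(\<lambda>x. indicator A x * q x) \<in> borel_measurable F" if "A \<in> sets F" for A
    using qm(1) that by (intro borel_measurable_times borel_measurable_indicator) auto
  have qb: "AE x in M. 0 \<le> q x \<and> q x \<le> 1"
    unfolding q_def by (rule cexp_bounds01[OF sf zEm]) (auto simp: zE_def)
  have Fsub: "\<And>A. A \<in> sets F \<Longrightarrow> A \<in> sets M"
    using subalg unfolding subalgebra_def by auto
  note subm = measurable_from_subalg[OF subalg]
  have bint: "integrable M (\<lambda>\<omega>. indicator A \<omega> * q \<omega> * g \<omega>)"
    if A: "A \<in> sets F" and gi: "integrable M g" for A and g :: "'a \<Rightarrow> real"
  proof (rule Bochner_Integration.integrable_bound[OF gi])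
    show "(\<lambda>\<omega>. indicator A \<omega> * q \<omega> * g \<omega>) \<in> borel_measurable M"
      using Fsub[OF A] gi by measurable
    show "AE x in M. norm (indicator A x * q x * g x) \<le> norm (g x)"
      using qb by eventually_elim (auto simp: indicator_def abs_mult intro!: mult_left_le_one_le)
  qed
  have bint2: "integrable M (\<lambda>\<omega>. indicator A \<omega> * (g \<omega> * zE \<omega>))"
    if A: "A \<in> sets F" and gi: "integrable M g" for A and g :: "'a \<Rightarrow> real"
  proof (rule Bochner_Integration.integrable_bound[OF gi])
    show "(\<lambda>\<omega>. indicator A \<omega> * (g \<omega> * zE \<omega>)) \<in> borel_measurable M"
      using Fsub[OF A] gi by measurable
    show "AE x in M. norm (indicator A x * (g x * zE x)) \<le> norm (g x)"
      by (auto simp: indicator_def zE_def)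
  qed
  define P where "P = (\<lambda>f::real\<Rightarrow>real. \<forall>A\<in>sets F.
      (\<integral>\<omega>. indicator A \<omega> * q \<omega> * f (X \<omega>) \<partial>M) = (\<integral>\<omega>. indicator A \<omega> * (f (X \<omega>) * zE \<omega>) \<partial>M))"
  have Xd: "integrable (distr M borel X) (\<lambda>x. x)"
    using Xi Xm by (subst integrable_distr_eq) auto
  have dmeas: "h \<in> borel_measurable borel" if "integrable (distr M borel X) h" for h :: "real \<Rightarrow> real"
  proof -
    have "h \<in> borel_measurable (distr M borel X)" using that by (rule borel_measurable_integrable)
    then show ?thesis by (metis measurable_cong_sets sets_distr)
  qed
  have dint: "integrable M (\<lambda>\<omega>. h (X \<omega>))" if "integrable (distr M borel X) h" for h :: "real \<Rightarrow> real"
    using that integrable_distr_eq[OF Xm dmeas[OF that]] by simp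
  have Pall: "P f" if fint: "integrable (distr M borel X) f" for f
    using fint
  proof (induct rule: integrable_induct)
    case (base B c)
    have B: "B \<in> sets borel" using base by simp
    have iB: "(\<lambda>\<omega>. indicator B (X \<omega>) :: real) = (\<lambda>\<omega>. if X \<omega> \<in> B then 1 else 0)"
      by (auto simp: indicator_def)
    have iBm[measurable]: "(\<lambda>\<omega>. if X \<omega> \<in> B then 1 else (0::real)) \<in> borel_measurable M"
      using B Xm by measurable
    have iBi: "integrable M (\<lambda>\<omega>. if X \<omega> \<in> B then 1 else (0::real))"
      by (rule integrable_const_bound[where B=1]) auto
    have ci1: "AE \<omega> in M. real_cond_exp M F (\<lambda>\<omega>. (if X \<omega> \<in> B then 1 else 0) * zE \<omega>) \<omega>
          = real_cond_exp M F (\<lambda>\<omega>. if X \<omega> \<in> B then 1 else 0) \<omega> * q \<omega>"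
      using ci B E unfolding cond_indep_def q_def zE_def by auto
    have beq: "(\<integral>\<omega>. indicator A \<omega> * q \<omega> * (indicator B (X \<omega>) *\<^sub>R c) \<partial>M)
          = (\<integral>\<omega>. indicator A \<omega> * ((indicator B (X \<omega>) *\<^sub>R c) * zE \<omega>) \<partial>M)"
      if A: "A \<in> sets F" for A
    proof -
      have Am[measurable]: "A \<in> sets M" using Fsub[OF A] .
      have "(\<integral>\<omega>. indicator A \<omega> * q \<omega> * (if X \<omega> \<in> B then 1 else 0) \<partial>M)
           = (\<integral>\<omega>. (indicator A \<omega> * q \<omega>) * real_cond_exp M F (\<lambda>\<omega>. if X \<omega> \<in> B then 1 else 0) \<omega> \<partial>M)"
        by (rule real_cond_exp_intg(2)[symmetric])
           (use bint[OF A iBi] A qAF[OF A] in \<open>auto simp: mult.assoc\<close>)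
      also have "\<dots> = (\<integral>\<omega>. indicator A \<omega> * real_cond_exp M F (\<lambda>\<omega>. (if X \<omega> \<in> B then 1 else 0) * zE \<omega>) \<omega> \<partial>M)"
        by (rule integral_cong_AE) (use ci1 in \<open>auto simp: mult_ac\<close>)
      also have "\<dots> = (\<integral>\<omega>. indicator A \<omega> * ((if X \<omega> \<in> B then 1 else 0) * zE \<omega>) \<partial>M)"
        by (rule real_cond_exp_intg(2))
           (use bint2[OF A iBi] A in auto)
      finally have eq: "(\<integral>\<omega>. indicator A \<omega> * q \<omega> * (if X \<omega> \<in> B then 1 else 0) \<partial>M)
          = (\<integral>\<omega>. indicator A \<omega> * ((if X \<omega> \<in> B then 1 else 0) * zE \<omega>) \<partial>M)" .
      have "(\<integral>\<omega>. indicator A \<omega> * q \<omega> * (indicator B (X \<omega>) *\<^sub>R c) \<partial>M)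
          = (\<integral>\<omega>. c * (indicator A \<omega> * q \<omega> * (if X \<omega> \<in> B then 1 else 0)) \<partial>M)"
        by (rule Bochner_Integration.integral_cong) (auto simp: indicator_def)
      also have "\<dots> = c * (\<integral>\<omega>. indicator A \<omega> * q \<omega> * (if X \<omega> \<in> B then 1 else 0) \<partial>M)"
        by (rule integral_mult_right_zero)
      also have "\<dots> = c * (\<integral>\<omega>. indicator A \<omega> * ((if X \<omega> \<in> B then 1 else 0) * zE \<omega>) \<partial>M)"
        using eq by simp
      also have "\<dots> = (\<integral>\<omega>. c * (indicator A \<omega> * ((if X \<omega> \<in> B then 1 else 0) * zE \<omega>)) \<partial>M)"
        by (rule integral_mult_right_zero[symmetric])
      also have "\<dots> = (\<integral>\<omega>. indicator A \<omega> * ((indicator B (X \<omega>) *\<^sub>R c) * zE \<omega>) \<partial>M)"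
        by (rule Bochner_Integration.integral_cong) (auto simp: indicator_def)
      finally show ?thesis .
    qed
    show ?case unfolding P_def using beq by simp
  next
    case (add f g)
    have fi: "integrable M (\<lambda>\<omega>. f (X \<omega>))" and gi: "integrable M (\<lambda>\<omega>. g (X \<omega>))"
      using add by (auto intro: dint)
    show ?case unfolding P_def
    proof
      fix A assume A: "A \<in> sets F"
      have "(\<integral>\<omega>. indicator A \<omega> * q \<omega> * (f (X \<omega>) + g (X \<omega>)) \<partial>M)
          = (\<integral>\<omega>. indicator A \<omega> * q \<omega> * f (X \<omega>) + indicator A \<omega> * q \<omega> * g (X \<omega>) \<partial>M)"
        by (simp add: algebra_simps)
      also have "\<dots> = (\<integral>\<omega>. indicator A \<omega> * q \<omega> * f (X \<omega>) \<partial>M) + (\<integral>\<omega>. indicator A \<omega> * q \<omega> * g (X \<omega>) \<partial>M)"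
        by (rule Bochner_Integration.integral_add) (use bint[OF A fi] bint[OF A gi] in auto)
      also have "\<dots> = (\<integral>\<omega>. indicator A \<omega> * (f (X \<omega>) * zE \<omega>) \<partial>M) + (\<integral>\<omega>. indicator A \<omega> * (g (X \<omega>) * zE \<omega>) \<partial>M)"
        using add A unfolding P_def by simp
      also have "\<dots> = (\<integral>\<omega>. indicator A \<omega> * (f (X \<omega>) * zE \<omega>) + indicator A \<omega> * (g (X \<omega>) * zE \<omega>) \<partial>M)"
        by (rule Bochner_Integration.integral_add[symmetric]) (use bint2[OF A fi] bint2[OF A gi] in auto)
      also have "\<dots> = (\<integral>\<omega>. indicator A \<omega> * ((f (X \<omega>) + g (X \<omega>)) * zE \<omega>) \<partial>M)"
        by (simp add: algebra_simps)
      finally show "(\<integral>\<omega>. indicator A \<omega> * q \<omega> * (f (X \<omega>) + g (X \<omega>)) \<partial>M)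
          = (\<integral>\<omega>. indicator A \<omega> * ((f (X \<omega>) + g (X \<omega>)) * zE \<omega>) \<partial>M)" .
    qed
  next
    case (lim f s)
    have fm[measurable]: "f \<in> borel_measurable borel" using lim(5) by (rule dmeas)
    have sm[measurable]: "\<And>i. s i \<in> borel_measurable borel" using lim(1) by (rule dmeas)
    have fi: "integrable M (\<lambda>\<omega>. f (X \<omega>))" using lim(5) by (rule dint)
    have fi2: "integrable M (\<lambda>\<omega>. 2 * norm (f (X \<omega>)))" using fi by auto
    show ?case unfolding P_def
    proof
      fix A assume A: "A \<in> sets F"
      have Am[measurable]: "A \<in> sets M" using Fsub[OF A] .
      have L1: "(\<lambda>i. \<integral>\<omega>. indicator A \<omega> * q \<omega> * s i (X \<omega>) \<partial>M) \<longlonglongrightarrow> (\<integral>\<omega>. indicator A \<omega> * q \<omega> * f (X \<omega>) \<partial>M)"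
      proof (rule integral_dominated_convergence[OF _ _ fi2])
        show "AE x in M. (\<lambda>i. indicator A x * q x * s i (X x)) \<longlonglongrightarrow> indicator A x * q x * f (X x)"
          using lim(3) by (auto intro!: tendsto_mult_left)
        show "AE x in M. norm (indicator A x * q x * s i (X x)) \<le> 2 * norm (f (X x))" for i
          using qb
        proof eventually_elim
          case (elim x)
          have "norm (indicator A x * q x * s i (X x)) \<le> norm (s i (X x))"
            using elim by (auto simp: indicator_def abs_mult intro!: mult_left_le_one_le)
          also have "\<dots> \<le> 2 * norm (f (X x))" using lim(4) by simp
          finally show ?case .
        qed
      qed measurable
      have L2: "(\<lambda>i. \<integral>\<omega>. indicator A \<omega> * (s i (X \<omega>) * zE \<omega>) \<partial>M) \<longlonglongrightarrow> (\<integral>\<omega>. indicator A \<omega> * (f (X \<omega>) * zE \<omega>) \<partial>M)"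
      proof (rule integral_dominated_convergence[OF _ _ fi2])
        show "AE x in M. (\<lambda>i. indicator A x * (s i (X x) * zE x)) \<longlonglongrightarrow> indicator A x * (f (X x) * zE x)"
          using lim(3) by (auto intro!: tendsto_mult_left tendsto_mult_right)
        show "AE x in M. norm (indicator A x * (s i (X x) * zE x)) \<le> 2 * norm (f (X x))" for i
        proof (rule AE_I2)
          fix x
          have "norm (indicator A x * (s i (X x) * zE x)) \<le> norm (s i (X x))"
            by (auto simp: indicator_def zE_def)
          also have "\<dots> \<le> 2 * norm (f (X x))" using lim(4) by simp
          finally show "norm (indicator A x * (s i (X x) * zE x)) \<le> 2 * norm (f (X x))" .
        qed
      qed measurable
      have eqs: "(\<lambda>i. \<integral>\<omega>. indicator A \<omega> * q \<omega> * s i (X \<omega>) \<partial>M) = (\<lambda>i. \<integral>\<omega>. indicator A \<omega> * (s i (X \<omega>) * zE \<omega>) \<partial>M)"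
        using lim(2) A unfolding P_def by simp
      from L1 have L1': "(\<lambda>i. \<integral>\<omega>. indicator A \<omega> * (s i (X \<omega>) * zE \<omega>) \<partial>M) \<longlonglongrightarrow> (\<integral>\<omega>. indicator A \<omega> * q \<omega> * f (X \<omega>) \<partial>M)"
        unfolding eqs .
      show "(\<integral>\<omega>. indicator A \<omega> * q \<omega> * f (X \<omega>) \<partial>M) = (\<integral>\<omega>. indicator A \<omega> * (f (X \<omega>) * zE \<omega>) \<partial>M)"
        using LIMSEQ_unique[OF L1' L2] .
    qed
  qed
  have "P (\<lambda>x. x)" using Pall[OF Xd] .
  then have key: "\<And>A. A \<in> sets F \<Longrightarrow>
      (\<integral>\<omega>. indicator A \<omega> * q \<omega> * X \<omega> \<partial>M) = (\<integral>\<omega>. indicator A \<omega> * (X \<omega> * zE \<omega>) \<partial>M)"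
    unfolding P_def by simp
  have XzEi: "integrable M (\<lambda>\<omega>. X \<omega> * zE \<omega>)"
    by (rule Bochner_Integration.integrable_bound[OF Xi]) (auto simp: zE_def)
  have cXi: "integrable M (\<lambda>\<omega>. real_cond_exp M F X \<omega> * q \<omega>)"
  proof (rule Bochner_Integration.integrable_bound[OF real_cond_exp_int(1)[OF Xi]])
    show "AE x in M. norm (real_cond_exp M F X x * q x) \<le> norm (real_cond_exp M F X x)"
      using qb by eventually_elim (auto simp: abs_mult intro!: mult_right_le_one_le)
  qed measurable
  have "AE \<omega> in M. real_cond_exp M F (\<lambda>\<omega>. X \<omega> * zE \<omega>) \<omega> = real_cond_exp M F X \<omega> * q \<omega>"
  proof (rule real_cond_exp_charact[OF _ XzEi cXi])
    fix A assume A: "A \<in> sets F"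
    have "(\<integral>\<omega>\<in>A. X \<omega> * zE \<omega> \<partial>M) = (\<integral>\<omega>. indicator A \<omega> * (X \<omega> * zE \<omega>) \<partial>M)"
      by (simp add: set_lebesgue_integral_def)
    also have "\<dots> = (\<integral>\<omega>. (indicator A \<omega> * q \<omega>) * X \<omega> \<partial>M)" using key[OF A] by simp
    also have "\<dots> = (\<integral>\<omega>. (indicator A \<omega> * q \<omega>) * real_cond_exp M F X \<omega> \<partial>M)"
      by (rule real_cond_exp_intg(2)[symmetric]) (use bint[OF A Xi] A qAF[OF A] in auto)
    also have "\<dots> = (\<integral>\<omega>\<in>A. real_cond_exp M F X \<omega> * q \<omega> \<partial>M)"
      by (simp add: set_lebesgue_integral_def mult_ac)
    finally show "(\<integral>\<omega>\<in>A. X \<omega> * zE \<omega> \<partial>M) = (\<integral>\<omega>\<in>A. real_cond_exp M F X \<omega> * q \<omega> \<partial>M)" .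
  qed (rule borel_measurable_times[OF borel_measurable_cond_exp qm(1)])
  then show ?thesis unfolding zE_def q_def .
qed



locale thm1 = prob_space M for M :: "'w measure" +
  fixes MC :: "'c measure" and MV :: "'v measure"
    and Cv :: "'w \<Rightarrow> 'c" and cN :: "'c \<Rightarrow> nat" and cV :: "'c \<Rightarrow> 'v"
    and N :: "'w \<Rightarrow> nat" and V :: "'w \<Rightarrow> 'v" and w :: "nat \<Rightarrow> 'v \<Rightarrow> real"
    and A :: "'w \<Rightarrow> bool" and \<pi> :: real
    and Dp :: "'w \<Rightarrow> bool \<Rightarrow> nat \<Rightarrow> bool"
    and Yp :: "'w \<Rightarrow> bool \<Rightarrow> nat \<Rightarrow> bool list \<Rightarrow> real"
    and D :: "'w \<Rightarrow> nat \<Rightarrow> bool" and Y :: "'w \<Rightarrow> nat \<Rightarrow> real"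
    and strong :: bool
    and p :: "bool \<Rightarrow> nat \<Rightarrow> 'c \<Rightarrow> real"
    and mu :: "bool \<Rightarrow> bool \<Rightarrow> nat \<Rightarrow> 'c \<Rightarrow> real"
    and g :: stratum and a astar :: bool
  assumes Cv_meas: "Cv \<in> measurable M MC"
    and cN_meas: "cN \<in> measurable MC (count_space UNIV)"
    and cV_meas: "cV \<in> measurable MC MV"
    and N_def: "\<forall>\<omega>\<in>space M. N \<omega> = cN (Cv \<omega>)"
    and V_def: "\<forall>\<omega>\<in>space M. V \<omega> = cV (Cv \<omega>)"
    and w_meas: "(\<lambda>(n, v). w n v) \<in> borel_measurable (count_space UNIV \<Otimes>\<^sub>M MV)"
    and W_sq: "integrable M (\<lambda>\<omega>. (w (N \<omega>) (V \<omega>))\<^sup>2)"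
    and N_fin: "\<exists>Nmax. AE \<omega> in M. 1 \<le> N \<omega> \<and> N \<omega> \<le> Nmax"
    and Yp_meas: "\<forall>a' j ds. (\<lambda>\<omega>. Yp \<omega> a' j ds) \<in> borel_measurable M"
    and Yp_sq: "\<forall>a' j ds. integrable M
                   (\<lambda>\<omega>. if j < N \<omega> \<and> length ds = N \<omega> then (Yp \<omega> a' j ds)\<^sup>2 else 0)"
    and A_meas: "A \<in> measurable M (count_space UNIV)"
    and D_meas: "\<forall>j. (\<lambda>\<omega>. D \<omega> j) \<in> measurable M (count_space UNIV)"
    and Y_meas: "\<forall>j. (\<lambda>\<omega>. Y \<omega> j) \<in> borel_measurable M"
    and consistency: "AE \<omega> in M. \<forall>j < N \<omega>.
        D \<omega> j = Dp \<omega> (A \<omega>) j \<and> Y \<omega> j = Yp \<omega> (A \<omega>) j (map (D \<omega>) [0..<N \<omega>])"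
    and pi_bounds: "0 < \<pi>" "\<pi> < 1"
    and A_bern: "measure M {\<omega> \<in> space M. A \<omega>} = \<pi>"
    and A_indep: "indep_rv M (count_space UNIV) A
        (MC \<Otimes>\<^sub>M (\<Pi>\<^sub>M i\<in>(UNIV :: (bool \<times> nat) set). count_space (UNIV :: bool set))
            \<Otimes>\<^sub>M (\<Pi>\<^sub>M i\<in>(UNIV :: (bool \<times> nat \<times> bool list) set). (borel :: real measure)))
        (\<lambda>\<omega>. (Cv \<omega>, (\<lambda>(a', k). Dp \<omega> a' k), (\<lambda>(a', j, ds). Yp \<omega> a' j ds)))"
    and monotonicity: "AE \<omega> in M. \<forall>j < N \<omega>.
        (Dp \<omega> False j \<longrightarrow> Dp \<omega> True j) \<and> (strong \<longrightarrow> \<not> Dp \<omega> False j)"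
    and ignorability: "\<forall>a' a'' j. cond_indep M (vimage_algebra (space M) Cv MC)
        (\<lambda>\<omega>. if j < N \<omega> then cf_outcome Dp Yp (N \<omega>) a' a'' \<omega> j else 0) borel
        (\<lambda>\<omega>. stratum_of (Dp \<omega> True j) (Dp \<omega> False j)) (count_space UNIV)"
    and p_meas: "\<forall>a' j. p a' j \<in> borel_measurable MC"
    and p_version: "\<forall>j. AE \<omega> in M. j < N \<omega> \<longrightarrow>
        p (A \<omega>) j (Cv \<omega>) =
        real_cond_exp M (vimage_algebra (space M) (\<lambda>\<omega>. (A \<omega>, Cv \<omega>)) (count_space UNIV \<Otimes>\<^sub>M MC))
          (\<lambda>\<omega>. if j < N \<omega> \<and> D \<omega> j then 1 else 0) \<omega>"
    and mu_meas: "\<forall>a' d j. mu a' d j \<in> borel_measurable MC"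
    and mu_version: "\<forall>j. AE \<omega> in M. j < N \<omega> \<longrightarrow>
        mu (A \<omega>) (D \<omega> j) j (Cv \<omega>) =
        real_cond_exp M (vimage_algebra (space M) (\<lambda>\<omega>. (A \<omega>, D \<omega> j, Cv \<omega>))
            (count_space UNIV \<Otimes>\<^sub>M count_space UNIV \<Otimes>\<^sub>M MC))
          (\<lambda>\<omega>. if j < N \<omega> then Y \<omega> j else 0) \<omega>"
    and positivity: "AE \<omega> in M. \<forall>j < N \<omega>.
        0 < p True j (Cv \<omega>) \<and> p True j (Cv \<omega>) < 1 \<and> p False j (Cv \<omega>) < 1 \<and>
        (\<not> strong \<longrightarrow> 0 < p False j (Cv \<omega>))"
    and adm: "admissible strong g a astar"
begin

abbreviation "MT \<equiv> (MC \<Otimes>\<^sub>M (\<Pi>\<^sub>M i\<in>(UNIV :: (bool \<times> nat) set). count_space (UNIV :: bool set))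
            \<Otimes>\<^sub>M (\<Pi>\<^sub>M i\<in>(UNIV :: (bool \<times> nat \<times> bool list) set). (borel :: real measure)))"
abbreviation "TT \<equiv> (\<lambda>\<omega>. (Cv \<omega>, (\<lambda>(a', k). Dp \<omega> a' k), (\<lambda>(a', j, ds). Yp \<omega> a' j ds)))"
abbreviation "FF \<equiv> vimage_algebra (space M) Cv MC"
abbreviation "FT \<equiv> vimage_algebra (space M) TT MT"

lemma TT_meas: "TT \<in> measurable M MT"
  by (rule conjunct1[OF conjunct2[OF A_indep[unfolded indep_rv_def]]])

lemma FT_TT_meas: "TT \<in> measurable FT MT"
  by (rule measurable_vimage_algebra1, rule Pi_I, rule measurable_space[OF TT_meas])

lemma subalg_FT: "subalgebra M FT" by (rule subalgebra_vimage[OF TT_meas])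
lemma subalg_FF: "subalgebra M FF" by (rule subalgebra_vimage[OF Cv_meas])
lemma sfs_FF: "sigma_finite_subalgebra M FF" by (rule sfs_vimage[OF Cv_meas])

lemma gen_meas:
  assumes Tm: "TT \<in> measurable S MT" and sp: "space S = space M"
  shows "Cv \<in> measurable S MC"
    and "\<And>a k. (\<lambda>\<omega>. Dp \<omega> a k) \<in> measurable S (count_space UNIV)"
    and "\<And>a j ds. (\<lambda>\<omega>. Yp \<omega> a j ds) \<in> borel_measurable S"
    and "N \<in> measurable S (count_space UNIV)"
    and "V \<in> measurable S MV"
proof -
  have C: "Cv \<in> measurable S MC"
    using measurable_compose[OF Tm measurable_fst] by simp
  then show "Cv \<in> measurable S MC" .
  fix a k
  have 1: "(\<lambda>x. x (a,k)) \<in> measurable (\<Pi>\<^sub>M i\<in>(UNIV :: (bool \<times> nat) set). count_space (UNIV :: bool set)) (count_space UNIV)"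
    by (rule measurable_component_singleton) simp
  have "(\<lambda>\<omega>. fst (snd (TT \<omega>)) (a, k)) \<in> measurable S (count_space UNIV)"
    by (rule measurable_compose[OF Tm measurable_compose[OF measurable_compose[OF measurable_snd measurable_fst] 1]])
  then show "(\<lambda>\<omega>. Dp \<omega> a k) \<in> measurable S (count_space UNIV)" by simp
next
  fix a j ds
  have 1: "(\<lambda>x. x (a,j,ds)) \<in> measurable (\<Pi>\<^sub>M i\<in>(UNIV :: (bool \<times> nat \<times> bool list) set). (borel :: real measure)) borel"
    by (rule measurable_component_singleton) simp
  have "(\<lambda>\<omega>. snd (snd (TT \<omega>)) (a, j, ds)) \<in> borel_measurable S"
    by (rule measurable_compose[OF Tm measurable_compose[OF measurable_compose[OF measurable_snd measurable_snd] 1]])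
  then show "(\<lambda>\<omega>. Yp \<omega> a j ds) \<in> borel_measurable S" by simp
next
  have C: "Cv \<in> measurable S MC"
    using measurable_compose[OF Tm measurable_fst] by simp
  have "(\<lambda>\<omega>. cN (Cv \<omega>)) \<in> measurable S (count_space UNIV)"
    using measurable_compose[OF C cN_meas] by simp
  then show "N \<in> measurable S (count_space UNIV)"
    by (rule measurable_cong[THEN iffD1, rotated]) (use N_def sp in auto)
  have "(\<lambda>\<omega>. cV (Cv \<omega>)) \<in> measurable S MV"
    using measurable_compose[OF C cV_meas] by simp
  then show "V \<in> measurable S MV"
    by (rule measurable_cong[THEN iffD1, rotated]) (use V_def sp in auto)
qed

lemmas M_meas = gen_meas[OF TT_meas refl]
lemmas FT_meas = gen_meas[OF FT_TT_meas space_vimage_algebra]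

end

lemma map_upt_eq_iff:
  "map f [0..<n] = ds \<longleftrightarrow> n = length ds \<and> (\<forall>k\<in>{..<length ds}. f k = ds ! k)"
  by (auto simp: list_eq_iff_nth_eq)

lemma cf_meas:
  assumes Dm: "\<And>a k. (\<lambda>\<omega>. Dp \<omega> a k) \<in> measurable S (count_space UNIV)"
    and Ym: "\<And>a j ds. (\<lambda>\<omega>. Yp \<omega> a j ds) \<in> borel_measurable S"
    and Nm: "N \<in> measurable S (count_space UNIV)"
  shows "(\<lambda>\<omega>. cf_outcome Dp Yp (N \<omega>) a b \<omega> j) \<in> borel_measurable S"
proof -
  define L where "L \<omega> = map (\<lambda>k. if k = j then Dp \<omega> b k else Dp \<omega> a k) [0..<N \<omega>]" for \<omega>
  have ev: "{\<omega>\<in>space S. Dp \<omega> c k = v} \<in> sets S" for c k v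
  proof -
    have "(\<lambda>\<omega>. Dp \<omega> c k) -` {v} \<inter> space S \<in> sets S" by (rule measurable_sets[OF Dm]) simp
    moreover have "{\<omega>\<in>space S. Dp \<omega> c k = v} = (\<lambda>\<omega>. Dp \<omega> c k) -` {v} \<inter> space S" by auto
    ultimately show ?thesis by simp
  qed
  have evN: "{\<omega>\<in>space S. N \<omega> = v} \<in> sets S" for v
  proof -
    have "N -` {v} \<inter> space S \<in> sets S" by (rule measurable_sets[OF Nm]) simp
    moreover have "{\<omega>\<in>space S. N \<omega> = v} = N -` {v} \<inter> space S" by auto
    ultimately show ?thesis by simp
  qed
  have Lm: "L \<in> measurable S (count_space UNIV)"
    unfolding measurable_count_space_eq2_countable
  proof (intro conjI ballI)
    show "L \<in> space S \<rightarrow> UNIV" by simp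
    fix ds :: "bool list"
    have "L -` {ds} \<inter> space S = {\<omega> \<in> space S. N \<omega> = length ds \<and>
        (\<forall>k\<in>{..<length ds}. Dp \<omega> (if k = j then b else a) k = ds ! k)}"
      unfolding L_def by (auto simp: map_upt_eq_iff if_distrib[of "\<lambda>c. Dp _ c _"])
    also have "\<dots> \<in> sets S"
      by (intro sets.sets_Collect_conj evN sets.sets_Collect_countable_All' ev) auto
    finally show "L -` {ds} \<inter> space S \<in> sets S" .
  qed
  have "(\<lambda>\<omega>. Yp \<omega> a j (L \<omega>)) \<in> borel_measurable S"
    by (rule measurable_compose_countable[OF _ Lm]) (rule Ym)
  then show ?thesis by (simp add: cf_outcome_def L_def)
qed



context thm1
begin

abbreviation "Xc a' b j \<equiv> (\<lambda>\<omega>. if j < N \<omega> then cf_outcome Dp Yp (N \<omega>) a' b \<omega> j else 0)"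
abbreviation "WW \<equiv> (\<lambda>\<omega>. w (N \<omega>) (V \<omega>))"

lemma Nmax_ex: obtains Nmax where "AE \<omega> in M. 1 \<le> N \<omega> \<and> N \<omega> \<le> Nmax"
  using N_fin by blast

lemma W_meas_gen:
  assumes "N \<in> measurable S (count_space UNIV)" "V \<in> measurable S MV"
  shows "WW \<in> borel_measurable S"
proof -
  have "(\<lambda>\<omega>. (N \<omega>, V \<omega>)) \<in> measurable S (count_space UNIV \<Otimes>\<^sub>M MV)"
    using assms by (rule measurable_Pair)
  from measurable_compose[OF this w_meas] show ?thesis by simp
qed

lemmas W_meas = W_meas_gen[OF M_meas(4,5)]

lemma sq_bound_int:
  fixes fa ga ha :: "'w \<Rightarrow> real"
  assumes fa: "integrable M (\<lambda>\<omega>. (fa \<omega>)\<^sup>2)" and ga: "integrable M (\<lambda>\<omega>. (ga \<omega>)\<^sup>2)"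
    and m: "ha \<in> borel_measurable M"
    and b: "AE \<omega> in M. \<bar>ha \<omega>\<bar> \<le> \<bar>fa \<omega> * ga \<omega>\<bar>"
  shows "integrable M ha"
proof (rule Bochner_Integration.integrable_bound[OF _ m])
  show "integrable M (\<lambda>\<omega>. (fa \<omega>)\<^sup>2 + (ga \<omega>)\<^sup>2)" using fa ga by simp
  show "AE x in M. norm (ha x) \<le> norm ((fa x)\<^sup>2 + (ga x)\<^sup>2)"
    using b
  proof eventually_elim
    case (elim x)
    have "\<bar>fa x * ga x\<bar> \<le> (fa x)\<^sup>2 + (ga x)\<^sup>2"
    proof -
      have "0 \<le> (\<bar>fa x\<bar> - \<bar>ga x\<bar>)\<^sup>2" by simp
      then have "2 * (\<bar>fa x\<bar> * \<bar>ga x\<bar>) \<le> (fa x)\<^sup>2 + (ga x)\<^sup>2"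
        by (simp add: power2_eq_square algebra_simps abs_mult_self_eq)
      then have "\<bar>fa x\<bar> * \<bar>ga x\<bar> \<le> (fa x)\<^sup>2 + (ga x)\<^sup>2"
        using mult_nonneg_nonneg[OF abs_ge_zero abs_ge_zero, of "fa x" "ga x"] by linarith
      then show ?thesis by (simp add: abs_mult)
    qed
    with elim show ?case by simp
  qed
qed

lemma W_int: "integrable M WW"
  by (rule sq_bound_int[where fa=WW and ga="\<lambda>_. 1"]) (auto simp: W_sq W_meas)

lemma Xc_meas_gen:
  assumes "TT \<in> measurable S MT" "space S = space M"
  shows "Xc a' b j \<in> borel_measurable S"
proof -
  note gm = gen_meas[OF assms]
  have "(\<lambda>\<omega>. cf_outcome Dp Yp (N \<omega>) a' b \<omega> j) \<in> borel_measurable S"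
    by (rule cf_meas[OF gm(2,3,4)])
  moreover have "Measurable.pred S (\<lambda>\<omega>. j < N \<omega>)" using gm(4) by measurable
  ultimately show ?thesis by measurable
qed

lemmas Xc_meas = Xc_meas_gen[OF TT_meas refl]
lemmas Xc_meas_FT = Xc_meas_gen[OF FT_TT_meas space_vimage_algebra]

lemma Xc_sq: "integrable M (\<lambda>\<omega>. (Xc a' b j \<omega>)\<^sup>2)"
proof -
  obtain Nmax where Nm: "AE \<omega> in M. 1 \<le> N \<omega> \<and> N \<omega> \<le> Nmax" by (rule Nmax_ex)
  define DS where "DS = {xs :: bool list. set xs \<subseteq> UNIV \<and> length xs \<le> Nmax}"
  have fin: "finite DS" unfolding DS_def by (rule finite_lists_length_le) simp
  define B where "B \<omega> = (\<Sum>ds\<in>DS. if j < N \<omega> \<and> length ds = N \<omega> then (Yp \<omega> a' j ds)\<^sup>2 else 0)" for \<omega>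
  have Bi: "integrable M B" unfolding B_def
    using Yp_sq by (intro Bochner_Integration.integrable_sum) blast
  show ?thesis
  proof (rule Bochner_Integration.integrable_bound[OF Bi])
    show "(\<lambda>\<omega>. (Xc a' b j \<omega>)\<^sup>2) \<in> borel_measurable M" using Xc_meas by measurable
    show "AE x in M. norm ((Xc a' b j x)\<^sup>2) \<le> norm (B x)"
      using Nm
    proof eventually_elim
      case (elim x)
      have B0: "0 \<le> B x" unfolding B_def by (intro sum_nonneg) auto
      show ?case
      proof (cases "j < N x")
        case True
        define L where "L = map (\<lambda>k. if k = j then Dp x b k else Dp x a' k) [0..<N x]"
        have LD: "L \<in> DS" using elim unfolding L_def DS_def by simp
        have "(Xc a' b j x)\<^sup>2 = (if j < N x \<and> length L = N x then (Yp x a' j L)\<^sup>2 else 0)"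
          using True by (simp add: cf_outcome_def L_def)
        also have "\<dots> \<le> B x" unfolding B_def
          by (rule member_le_sum[OF LD _ fin]) auto
        finally show ?thesis using B0 by simp
      next
        case False
        then show ?thesis using B0 by simp
      qed
    qed
  qed
qed

lemma Xc_int: "integrable M (Xc a' b j)"
  by (rule sq_bound_int[where fa="Xc a' b j" and ga="\<lambda>_. 1"]) (auto intro: Xc_sq Xc_meas)

end


context thm1
begin

lemma A_meas'[measurable]: "A \<in> measurable M (count_space UNIV)" by (rule A_meas)
lemma D_meas'[measurable]: "(\<lambda>\<omega>. D \<omega> j) \<in> measurable M (count_space UNIV)" using D_meas by blast
lemma Y_meas'[measurable]: "(\<lambda>\<omega>. Y \<omega> j) \<in> borel_measurable M" using Y_meas by blast
lemma p_meas'[measurable]: "p a' j \<in> borel_measurable MC" using p_meas by blast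
lemma mu_meas'[measurable]: "mu a' d j \<in> borel_measurable MC" using mu_meas by blast
lemmas Cv_meas'[measurable] = Cv_meas
lemmas cN_meas'[measurable] = cN_meas
lemma Dp_meas'[measurable]: "(\<lambda>\<omega>. Dp \<omega> a' k) \<in> measurable M (count_space UNIV)" by (rule M_meas(2))
lemma N_meas'[measurable]: "N \<in> measurable M (count_space UNIV)" by (rule M_meas(4))

abbreviation "piA a' \<equiv> prob {\<omega>\<in>space M. A \<omega> = a'}"

lemma Aset[measurable]: "{\<omega>\<in>space M. A \<omega> = a'} \<in> events" by measurable

lemma piA_pos: "piA a' > 0"
proof (cases a')
  case True
  have "{\<omega>\<in>space M. A \<omega> = a'} = {\<omega>\<in>space M. A \<omega>}" using True by auto
  then show ?thesis using A_bern pi_bounds by simp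
next
  case False
  have "{\<omega>\<in>space M. A \<omega> = a'} = space M - {\<omega>\<in>space M. A \<omega>}" using False by auto
  moreover have "{\<omega>\<in>space M. A \<omega>} \<in> events" by measurable
  ultimately have "piA a' = 1 - \<pi>" using A_bern prob_compl by simp
  then show ?thesis using pi_bounds by simp
qed

lemma FT_C_pred: assumes "Measurable.pred MC Q" shows "{\<omega>\<in>space M. Q (Cv \<omega>)} \<in> sets FT"
proof -
  have "Cv -` {c\<in>space MC. Q c} \<inter> space FT \<in> sets FT"
    by (rule measurable_sets[OF FT_meas(1)]) (use assms in measurable)
  moreover have "Cv -` {c\<in>space MC. Q c} \<inter> space FT = {\<omega>\<in>space M. Q (Cv \<omega>)}"
    using measurable_space[OF Cv_meas] by auto
  ultimately show ?thesis by simp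
qed

lemma FF_Cv_meas: "Cv \<in> measurable FF MC"
  by (rule measurable_vimage_algebra1, rule Pi_I, rule measurable_space[OF Cv_meas])

lemma FF_C_set: assumes "S \<in> sets MC" shows "{\<omega>\<in>space M. Cv \<omega> \<in> S} \<in> sets FF"
proof -
  have "Cv -` S \<inter> space M \<in> sets FF" by (rule in_vimage_algebra[OF assms])
  moreover have "Cv -` S \<inter> space M = {\<omega>\<in>space M. Cv \<omega> \<in> S}" by auto
  ultimately show ?thesis by simp
qed

lemma FF_sets: "sets FF = {{\<omega>\<in>space M. Cv \<omega> \<in> S} | S. S \<in> sets MC}"
proof -
  have "Cv \<in> space M \<rightarrow> space MC" by (rule Pi_I, rule measurable_space[OF Cv_meas])
  then show ?thesis by (auto simp: sets_vimage_algebra2 vimage_def Int_def conj_commute)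
qed

lemma cons_D: "AE \<omega> in M. \<forall>j < N \<omega>. D \<omega> j = Dp \<omega> (A \<omega>) j"
  using consistency by eventually_elim auto

lemma cons_Y: "AE \<omega> in M. \<forall>j < N \<omega>. Y \<omega> j = cf_outcome Dp Yp (N \<omega>) (A \<omega>) (A \<omega>) \<omega> j"
  using consistency
proof eventually_elim
  case (elim \<omega>)
  show ?case
  proof (intro allI impI)
    fix j assume j: "j < N \<omega>"
    have Yeq: "Y \<omega> j = Yp \<omega> (A \<omega>) j (map (D \<omega>) [0..<N \<omega>])" using elim j by blast
    have m: "map (D \<omega>) [0..<N \<omega>] = map (Dp \<omega> (A \<omega>)) [0..<N \<omega>]"
      by (rule map_cong) (use elim in auto)
    have m2: "map (\<lambda>k. if k = j then Dp \<omega> (A \<omega>) k else Dp \<omega> (A \<omega>) k) [0..<N \<omega>] = map (Dp \<omega> (A \<omega>)) [0..<N \<omega>]"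
      by simp
    show "Y \<omega> j = cf_outcome Dp Yp (N \<omega>) (A \<omega>) (A \<omega>) \<omega> j"
      unfolding cf_outcome_def m2 Yeq m ..
  qed
qed

abbreviation "FAC \<equiv> vimage_algebra (space M) (\<lambda>\<omega>. (A \<omega>, Cv \<omega>)) (count_space UNIV \<Otimes>\<^sub>M MC)"

lemma AC_meas: "(\<lambda>\<omega>. (A \<omega>, Cv \<omega>)) \<in> measurable M (count_space UNIV \<Otimes>\<^sub>M MC)" by measurable

lemma sfs_FAC: "sigma_finite_subalgebra M FAC" by (rule sfs_vimage[OF AC_meas])

lemma PB: "AE \<omega> in M. j < N \<omega> \<longrightarrow> 0 \<le> p a' j (Cv \<omega>) \<and> p a' j (Cv \<omega>) \<le> 1"
proof -
  define f :: "'w \<Rightarrow> real" where "f = (\<lambda>\<omega>. if j < N \<omega> \<and> D \<omega> j then 1 else 0)"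
  have fm: "f \<in> borel_measurable M" unfolding f_def by measurable
  have b: "AE \<omega> in M. 0 \<le> real_cond_exp M FAC f \<omega> \<and> real_cond_exp M FAC f \<omega> \<le> 1"
    by (rule cexp_bounds01[OF sfs_FAC fm]) (auto simp: f_def)
  have pv: "AE \<omega> in M. j < N \<omega> \<longrightarrow> p (A \<omega>) j (Cv \<omega>) = real_cond_exp M FAC f \<omega>"
    using p_version unfolding f_def by blast
  have ae: "AE \<omega> in M. A \<omega> = a' \<longrightarrow> (j < N \<omega> \<longrightarrow> 0 \<le> p a' j (Cv \<omega>) \<and> p a' j (Cv \<omega>) \<le> 1)"
    using b pv by eventually_elim auto
  have Pset: "{\<omega>\<in>space M. j < N \<omega> \<longrightarrow> 0 \<le> p a' j (Cv \<omega>) \<and> p a' j (Cv \<omega>) \<le> 1} \<in> sets FT"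
  proof -
    have "{\<omega>\<in>space M. (\<lambda>c. j < cN c \<longrightarrow> 0 \<le> p a' j c \<and> p a' j c \<le> 1) (Cv \<omega>)} \<in> sets FT"
      by (rule FT_C_pred) measurable
    moreover have "{\<omega>\<in>space M. (\<lambda>c. j < cN c \<longrightarrow> 0 \<le> p a' j c \<and> p a' j c \<le> 1) (Cv \<omega>)}
        = {\<omega>\<in>space M. j < N \<omega> \<longrightarrow> 0 \<le> p a' j (Cv \<omega>) \<and> p a' j (Cv \<omega>) \<le> 1}"
      using N_def by auto
    ultimately show ?thesis by simp
  qed
  show ?thesis by (rule indep_rv_AE[OF A_indep Pset piA_pos ae])
qed

end


context thm1
begin

lemma QA_int:
  assumes S: "S \<in> sets MC"
  shows "(\<integral>\<omega>. indicator {\<omega>\<in>space M. Cv \<omega> \<in> S} \<omega> * (if j < N \<omega> \<and> Dp \<omega> a' j then 1 else 0) \<partial>M)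
       = (\<integral>\<omega>. indicator {\<omega>\<in>space M. Cv \<omega> \<in> S} \<omega> * (if j < cN (Cv \<omega>) then p a' j (Cv \<omega>) else 0) \<partial>M)"
proof -
  interpret FAC: sigma_finite_subalgebra M FAC by (rule sfs_FAC)
  define f :: "'w \<Rightarrow> real" where "f = (\<lambda>\<omega>. if j < N \<omega> \<and> Dp \<omega> a' j then 1 else 0)"
  define g :: "'w \<Rightarrow> real" where "g = (\<lambda>\<omega>. if j < cN (Cv \<omega>) then p a' j (Cv \<omega>) else 0)"
  define hS :: "'w \<Rightarrow> real" where "hS = indicator {\<omega>\<in>space M. Cv \<omega> \<in> S}"
  define fD :: "'w \<Rightarrow> real" where "fD = (\<lambda>\<omega>. if j < N \<omega> \<and> D \<omega> j then 1 else 0)"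
  define B where "B = {\<omega>\<in>space M. A \<omega> = a' \<and> Cv \<omega> \<in> S \<and> j < N \<omega>}"
  define iA :: "'w \<Rightarrow> real" where "iA = indicator {\<omega>\<in>space M. A \<omega> = a'}"
  note S[measurable]
  have hSFT: "hS \<in> borel_measurable FT"
    unfolding hS_def by (rule borel_measurable_indicator, rule FT_C_pred) measurable
  have fFT: "f \<in> borel_measurable FT"
  proof -
    note FT_meas(2)[measurable] FT_meas(4)[measurable]
    show ?thesis unfolding f_def by measurable
  qed
  have gMC: "(\<lambda>c. if j < cN c then p a' j c else 0) \<in> borel_measurable MC" by measurable
  have gFT: "g \<in> borel_measurable FT"
    unfolding g_def using measurable_compose[OF FT_meas(1) gMC] by simp
  have hSm[measurable]: "hS \<in> borel_measurable M" unfolding hS_def by measurable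
  have fm[measurable]: "f \<in> borel_measurable M" unfolding f_def by measurable
  have gm[measurable]: "g \<in> borel_measurable M" unfolding g_def by measurable
  have fDm[measurable]: "fD \<in> borel_measurable M" unfolding fD_def by measurable
  have iAm[measurable]: "iA \<in> borel_measurable M" unfolding iA_def by measurable
  have gb: "AE \<omega> in M. \<bar>g \<omega>\<bar> \<le> 1"
    using PB[of j a'] AE_space by eventually_elim (auto simp: g_def N_def)
  have hSf_int: "integrable M (\<lambda>\<omega>. hS \<omega> * f \<omega>)"
    by (rule integrable_const_bound[where B=1]) (auto simp: hS_def f_def indicator_def)
  have hSg_int: "integrable M (\<lambda>\<omega>. hS \<omega> * g \<omega>)"
    by (rule integrable_const_bound[where B=1]) (use gb in \<open>auto simp: hS_def indicator_def\<close>)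
  have BFAC: "B \<in> sets FAC"
  proof -
    have "{a'} \<times> (S \<inter> {c\<in>space MC. j < cN c}) \<in> sets (count_space UNIV \<Otimes>\<^sub>M MC)"
      by (intro pair_measureI) (auto intro: sets.Int)
    then have "(\<lambda>\<omega>. (A \<omega>, Cv \<omega>)) -` ({a'} \<times> (S \<inter> {c\<in>space MC. j < cN c})) \<inter> space M \<in> sets FAC"
      by (rule in_vimage_algebra)
    moreover have "(\<lambda>\<omega>. (A \<omega>, Cv \<omega>)) -` ({a'} \<times> (S \<inter> {c\<in>space MC. j < cN c})) \<inter> space M = B"
      unfolding B_def using N_def measurable_space[OF Cv_meas] by auto
    ultimately show ?thesis by simp
  qed
  have iBm: "indicator B \<in> borel_measurable FAC" using BFAC by simp
  have BM[measurable]: "B \<in> sets M" using BFAC FAC.subalg unfolding subalgebra_def by auto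
  have iBfD: "integrable M (\<lambda>x. indicator B x * fD x)"
  proof (rule integrable_const_bound[where B=1])
    show "AE x in M. norm (indicator B x * fD x) \<le> 1" by (auto simp: fD_def indicator_def)
  qed measurable
  have step_a: "(\<integral>\<omega>. indicator B \<omega> * real_cond_exp M FAC fD \<omega> \<partial>M) = (\<integral>\<omega>. indicator B \<omega> * fD \<omega> \<partial>M)"
    by (rule FAC.real_cond_exp_intg(2)[OF iBfD iBm fDm])
  have step_b: "(\<integral>\<omega>. indicator B \<omega> * real_cond_exp M FAC fD \<omega> \<partial>M) = (\<integral>\<omega>. iA \<omega> * (hS \<omega> * g \<omega>) \<partial>M)"
  proof (rule integral_cong_AE)
    show "AE x in M. indicator B x * real_cond_exp M FAC fD x = iA x * (hS x * g x)"
      using p_version[rule_format, of j] AE_space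
    proof eventually_elim
      case (elim x)
      then show ?case
        unfolding fD_def B_def iA_def hS_def g_def by (auto simp: indicator_def N_def)
    qed
    show "(\<lambda>x. indicator B x * real_cond_exp M FAC fD x) \<in> borel_measurable M"
      using BFAC FAC.subalg unfolding subalgebra_def by measurable
  qed measurable
  have step_c: "(\<integral>\<omega>. indicator B \<omega> * fD \<omega> \<partial>M) = (\<integral>\<omega>. iA \<omega> * (hS \<omega> * f \<omega>) \<partial>M)"
  proof (rule integral_cong_AE)
    show "AE x in M. indicator B x * fD x = iA x * (hS x * f x)"
      using cons_D
    proof eventually_elim
      case (elim x)
      then show ?case
        unfolding fD_def B_def iA_def hS_def f_def by (auto simp: indicator_def)
    qed
    show "(\<lambda>x. indicator B x * fD x) \<in> borel_measurable M"
      using BFAC FAC.subalg unfolding subalgebra_def by measurable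
  qed measurable
  have e1: "(\<integral>\<omega>. iA \<omega> * (hS \<omega> * f \<omega>) \<partial>M) = piA a' * (\<integral>\<omega>. hS \<omega> * f \<omega> \<partial>M)"
    unfolding iA_def by (rule indep_rv_integral[OF A_indep _ hSf_int]) (use hSFT fFT in measurable)
  have e2: "(\<integral>\<omega>. iA \<omega> * (hS \<omega> * g \<omega>) \<partial>M) = piA a' * (\<integral>\<omega>. hS \<omega> * g \<omega> \<partial>M)"
    unfolding iA_def by (rule indep_rv_integral[OF A_indep _ hSg_int]) (use hSFT gFT in measurable)
  have "piA a' * (\<integral>\<omega>. hS \<omega> * f \<omega> \<partial>M) = (\<integral>\<omega>. iA \<omega> * (hS \<omega> * f \<omega>) \<partial>M)" using e1 by simp
  also have "\<dots> = (\<integral>\<omega>. indicator B \<omega> * fD \<omega> \<partial>M)" using step_c by simp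
  also have "\<dots> = (\<integral>\<omega>. indicator B \<omega> * real_cond_exp M FAC fD \<omega> \<partial>M)" using step_a by simp
  also have "\<dots> = (\<integral>\<omega>. iA \<omega> * (hS \<omega> * g \<omega>) \<partial>M)" using step_b by simp
  also have "\<dots> = piA a' * (\<integral>\<omega>. hS \<omega> * g \<omega> \<partial>M)" using e2 by simp
  finally have "piA a' * (\<integral>\<omega>. hS \<omega> * f \<omega> \<partial>M) = piA a' * (\<integral>\<omega>. hS \<omega> * g \<omega> \<partial>M)" .
  then have "(\<integral>\<omega>. hS \<omega> * f \<omega> \<partial>M) = (\<integral>\<omega>. hS \<omega> * g \<omega> \<partial>M)"
    using piA_pos[of a'] by simp
  then show ?thesis unfolding hS_def f_def g_def .
qed

end


context thm1
begin

abbreviation "GS j \<omega> \<equiv> stratum_of (Dp \<omega> True j) (Dp \<omega> False j)"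
abbreviation "Ione j \<equiv> (\<lambda>\<omega>. if j < cN (Cv \<omega>) then 1 else (0::real))"

lemma Ione_FF: "Ione j \<in> borel_measurable FF"
proof -
  have "(\<lambda>c. if j < cN c then 1 else (0::real)) \<in> borel_measurable MC" by measurable
  from measurable_compose[OF FF_Cv_meas this] show ?thesis by simp
qed

lemma cexp_I:
  assumes fm: "f \<in> borel_measurable M" and fi: "integrable M f"
  shows "AE \<omega> in M. j < N \<omega> \<longrightarrow> real_cond_exp M FF f \<omega> = real_cond_exp M FF (\<lambda>\<omega>. if j < N \<omega> then f \<omega> else 0) \<omega>"
proof -
  interpret FFs: sigma_finite_subalgebra M FF by (rule sfs_FF)
  have Im: "Ione j \<in> borel_measurable M" by measurable
  have Ifi: "integrable M (\<lambda>x. Ione j x * f x)"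
  proof (rule Bochner_Integration.integrable_bound[OF fi])
    show "(\<lambda>x. Ione j x * f x) \<in> borel_measurable M" by (rule borel_measurable_times[OF Im fm])
  qed auto
  have 1: "AE x in M. real_cond_exp M FF (\<lambda>x. Ione j x * f x) x = Ione j x * real_cond_exp M FF f x"
    by (rule FFs.real_cond_exp_mult[OF Ione_FF fm Ifi])
  have 2: "AE x in M. real_cond_exp M FF (\<lambda>x. Ione j x * f x) x = real_cond_exp M FF (\<lambda>\<omega>. if j < N \<omega> then f \<omega> else 0) x"
    by (rule FFs.real_cond_exp_cong) (auto simp: N_def intro: borel_measurable_times[OF Im fm] measurable_If[OF fm])
  show ?thesis using 1 2 AE_space by eventually_elim (auto simp: N_def)
qed

lemma QA:
  "AE \<omega> in M. real_cond_exp M FF (\<lambda>\<omega>. if j < N \<omega> \<and> Dp \<omega> a' j then 1 else 0) \<omega>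
      = (if j < cN (Cv \<omega>) then p a' j (Cv \<omega>) else 0)"
proof -
  interpret FFs: sigma_finite_subalgebra M FF by (rule sfs_FF)
  have gMC: "(\<lambda>c. if j < cN c then p a' j c else 0) \<in> borel_measurable MC" by measurable
  have gFF: "(\<lambda>\<omega>. if j < cN (Cv \<omega>) then p a' j (Cv \<omega>) else 0) \<in> borel_measurable FF"
    using measurable_compose[OF FF_Cv_meas gMC] by simp
  have gb: "AE \<omega> in M. norm (if j < cN (Cv \<omega>) then p a' j (Cv \<omega>) else 0) \<le> 1"
    using PB[of j a'] AE_space by eventually_elim (auto simp: N_def)
  show ?thesis
  proof (rule FFs.real_cond_exp_charact)
    fix A' assume "A' \<in> sets FF"
    then obtain S where S: "S \<in> sets MC" and A': "A' = {\<omega>\<in>space M. Cv \<omega> \<in> S}"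
      unfolding FF_sets by auto
    show "(\<integral>\<omega>\<in>A'. (if j < N \<omega> \<and> Dp \<omega> a' j then 1 else 0) \<partial>M)
        = (\<integral>\<omega>\<in>A'. (if j < cN (Cv \<omega>) then p a' j (Cv \<omega>) else 0) \<partial>M)"
      unfolding set_lebesgue_integral_def A' using QA_int[OF S, of j a'] by simp
  next
    show "integrable M (\<lambda>\<omega>. if j < N \<omega> \<and> Dp \<omega> a' j then 1 else (0::real))"
      by (rule integrable_const_bound[where B=1]) auto
    show "integrable M (\<lambda>\<omega>. if j < cN (Cv \<omega>) then p a' j (Cv \<omega>) else 0)"
      by (rule integrable_const_bound[OF gb]) measurable
  qed (rule gFF)
qed

lemma stratum_eqs:
  "(stratum_of d1 d0 = At) \<longleftrightarrow> d1 \<and> d0"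
  "(stratum_of d1 d0 = Co) \<longleftrightarrow> d1 \<and> \<not> d0"
  "(stratum_of d1 d0 = Nt) \<longleftrightarrow> \<not> d1 \<and> \<not> d0"
  "(stratum_of d1 d0 = De) \<longleftrightarrow> \<not> d1 \<and> d0"
  by (auto simp: stratum_of_def)

lemma part1_j:
  fixes gg :: stratum
  assumes gg: "gg \<noteq> De"
  shows "AE \<omega> in M. j < N \<omega> \<longrightarrow>
    real_cond_exp M FF (\<lambda>\<omega>. if j < N \<omega> \<and> GS j \<omega> = gg then 1 else 0) \<omega> = escore p gg j (Cv \<omega>)"
proof -
  interpret FFs: sigma_finite_subalgebra M FF by (rule sfs_FF)
  define fT :: "'w \<Rightarrow> real" where "fT = (\<lambda>\<omega>. if j < N \<omega> \<and> Dp \<omega> True j then 1 else 0)"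
  define fF :: "'w \<Rightarrow> real" where "fF = (\<lambda>\<omega>. if j < N \<omega> \<and> Dp \<omega> False j then 1 else 0)"
  define fI :: "'w \<Rightarrow> real" where "fI = (\<lambda>\<omega>. if j < N \<omega> then 1 else 0)"
  define comb where "comb = (case gg of At \<Rightarrow> fF | Co \<Rightarrow> (\<lambda>\<omega>. fT \<omega> - fF \<omega>) | Nt \<Rightarrow> (\<lambda>\<omega>. fI \<omega> - fT \<omega>) | De \<Rightarrow> (\<lambda>_. 0))"
  have fTm[measurable]: "fT \<in> borel_measurable M" unfolding fT_def by measurable
  have fFm[measurable]: "fF \<in> borel_measurable M" unfolding fF_def by measurable
  have fIm[measurable]: "fI \<in> borel_measurable M" unfolding fI_def by measurable
  have fTi: "integrable M fT" by (rule integrable_const_bound[where B=1]) (auto simp: fT_def)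
  have fFi: "integrable M fF" by (rule integrable_const_bound[where B=1]) (auto simp: fF_def)
  have fIi: "integrable M fI" by (rule integrable_const_bound[where B=1]) (auto simp: fI_def)
  have combm: "comb \<in> borel_measurable M" unfolding comb_def by (cases gg) simp_all
  have mono: "AE \<omega> in M. \<forall>j < N \<omega>. Dp \<omega> False j \<longrightarrow> Dp \<omega> True j"
    using monotonicity by eventually_elim auto
  have ae1: "AE \<omega> in M. (if j < N \<omega> \<and> GS j \<omega> = gg then 1 else 0) = comb \<omega>"
    using mono
  proof eventually_elim
    case (elim \<omega>)
    then show ?case using gg
      by (cases gg) (auto simp: comb_def fT_def fF_def fI_def stratum_eqs)
  qed
  have c1: "AE \<omega> in M. real_cond_exp M FF (\<lambda>\<omega>. if j < N \<omega> \<and> GS j \<omega> = gg then 1 else 0) \<omega>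
      = real_cond_exp M FF comb \<omega>"
    by (rule FFs.real_cond_exp_cong[OF ae1]) (measurable, rule combm)
  have cI: "AE \<omega> in M. real_cond_exp M FF fI \<omega> = Ione j \<omega>"
  proof -
    have "AE \<omega> in M. real_cond_exp M FF fI \<omega> = real_cond_exp M FF (Ione j) \<omega>"
      by (rule FFs.real_cond_exp_cong) (auto simp: fI_def N_def)
    moreover have "AE \<omega> in M. real_cond_exp M FF (Ione j) \<omega> = Ione j \<omega>"
      by (rule FFs.real_cond_exp_F_meas[OF _ Ione_FF])
         (rule integrable_const_bound[where B=1], auto)
    ultimately show ?thesis by eventually_elim simp
  qed
  have c2: "AE \<omega> in M. real_cond_exp M FF comb \<omega> =
      (case gg of At \<Rightarrow> real_cond_exp M FF fF \<omega>
        | Co \<Rightarrow> real_cond_exp M FF fT \<omega> - real_cond_exp M FF fF \<omega>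
        | Nt \<Rightarrow> real_cond_exp M FF fI \<omega> - real_cond_exp M FF fT \<omega>
        | De \<Rightarrow> 0)"
  proof (cases gg)
    case At then show ?thesis by (simp add: comb_def)
  next
    case Co then show ?thesis unfolding comb_def
      using FFs.real_cond_exp_diff[OF fTi fFi] by simp
  next
    case Nt then show ?thesis unfolding comb_def
      using FFs.real_cond_exp_diff[OF fIi fTi] by simp
  next
    case De then show ?thesis using gg by simp
  qed
  show ?thesis
    using c1 c2 cI QA[of j True] QA[of j False] AE_space
  proof eventually_elim
    case (elim \<omega>)
    then show ?case using gg
      by (cases gg) (auto simp: escore_def fT_def fF_def N_def)
  qed
qed

end


context thm1
begin

abbreviation "IY j \<equiv> (\<lambda>\<omega>. if j < N \<omega> then Y \<omega> j else 0)"
abbreviation "FADC j \<equiv> vimage_algebra (space M) (\<lambda>\<omega>. (A \<omega>, D \<omega> j, Cv \<omega>))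
            (count_space UNIV \<Otimes>\<^sub>M count_space UNIV \<Otimes>\<^sub>M MC)"

lemma ADC_meas: "(\<lambda>\<omega>. (A \<omega>, D \<omega> j, Cv \<omega>)) \<in> measurable M (count_space UNIV \<Otimes>\<^sub>M count_space UNIV \<Otimes>\<^sub>M MC)"
  by measurable

lemma sfs_FADC: "sigma_finite_subalgebra M (FADC j)" by (rule sfs_vimage[OF ADC_meas])

lemma IY_int: "integrable M (IY j)"
proof -
  have i: "integrable M (\<lambda>\<omega>. (if A \<omega> then Xc True True j \<omega> else Xc False False j \<omega>))"
  proof (rule Bochner_Integration.integrable_bound)
    show "integrable M (\<lambda>\<omega>. \<bar>Xc True True j \<omega>\<bar> + \<bar>Xc False False j \<omega>\<bar>)"
      using Xc_int[of j True True] Xc_int[of j False False] by simp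
    show "(\<lambda>\<omega>. (if A \<omega> then Xc True True j \<omega> else Xc False False j \<omega>)) \<in> borel_measurable M"
      using Xc_meas[of j True True] Xc_meas[of j False False] by measurable
  qed auto
  have "AE \<omega> in M. (if A \<omega> then Xc True True j \<omega> else Xc False False j \<omega>) = IY j \<omega>"
    using cons_Y by eventually_elim auto
  then show ?thesis using i
    by (subst integrable_cong_AE[symmetric]) (auto intro: Xc_meas)
qed

definition dproj :: "bool \<Rightarrow> stratum \<Rightarrow> bool" where
  "dproj a' s = (if a' then s \<in> {At, Co} else s \<in> {At, De})"

lemma dproj_GS: "dproj a' (stratum_of d1 d0) = (if a' then d1 else d0)"
  by (auto simp: dproj_def stratum_of_def)

lemma K_int:
  fixes n :: nat and d a' :: bool and j :: nat
  assumes S: "S \<in> sets MC"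
  defines "SK \<equiv> {c\<in>space MC. j < cN c \<and> \<bar>mu a' d j c\<bar> \<le> real n}"
  shows "(\<integral>\<omega>. indicator {\<omega>\<in>space M. Cv \<omega> \<in> S \<inter> SK} \<omega> * (Xc a' a' j \<omega> * (if Dp \<omega> a' j = d then 1 else 0)) \<partial>M)
       = (\<integral>\<omega>. indicator {\<omega>\<in>space M. Cv \<omega> \<in> S \<inter> SK} \<omega> * ((if Dp \<omega> a' j = d then 1 else 0) * mu a' d j (Cv \<omega>)) \<partial>M)"
proof -
  interpret FADC: sigma_finite_subalgebra M "FADC j" by (rule sfs_FADC)
  define hS :: "'w \<Rightarrow> real" where "hS = indicator {\<omega>\<in>space M. Cv \<omega> \<in> S \<inter> SK}"
  define zE :: "'w \<Rightarrow> real" where "zE = (\<lambda>\<omega>. if Dp \<omega> a' j = d then 1 else 0)"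
  define muC where "muC = (\<lambda>\<omega>. mu a' d j (Cv \<omega>))"
  define iA :: "'w \<Rightarrow> real" where "iA = indicator {\<omega>\<in>space M. A \<omega> = a'}"
  define B where "B = {\<omega>\<in>space M. A \<omega> = a' \<and> D \<omega> j = d \<and> Cv \<omega> \<in> S \<inter> SK}"
  have SKm[measurable]: "SK \<in> sets MC" unfolding SK_def by measurable
  note S[measurable]
  have hSm[measurable]: "hS \<in> borel_measurable M" unfolding hS_def by measurable
  have zEm[measurable]: "zE \<in> borel_measurable M" unfolding zE_def by measurable
  have muCm[measurable]: "muC \<in> borel_measurable M" unfolding muC_def by measurable
  have iAm[measurable]: "iA \<in> borel_measurable M" unfolding iA_def by measurable
  note Xm[measurable] = Xc_meas[of j a' a']
  have hSFT: "hS \<in> borel_measurable FT"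
    unfolding hS_def by (rule borel_measurable_indicator, rule FT_C_pred) measurable
  have zEFT: "zE \<in> borel_measurable FT"
  proof -
    note FT_meas(2)[measurable]
    show ?thesis unfolding zE_def by measurable
  qed
  have muCFT: "muC \<in> borel_measurable FT"
    unfolding muC_def using measurable_compose[OF FT_meas(1) mu_meas'[of a' d j]] by simp
  have XFT: "Xc a' a' j \<in> borel_measurable FT" by (rule Xc_meas_FT)
  have hSb: "hS \<omega> * muC \<omega> \<le> real n \<and> - real n \<le> hS \<omega> * muC \<omega>" for \<omega>
    by (auto simp: hS_def muC_def SK_def indicator_def abs_le_iff)
  have i1: "integrable M (\<lambda>\<omega>. hS \<omega> * zE \<omega> * Xc a' a' j \<omega>)"
    by (rule Bochner_Integration.integrable_bound[OF Xc_int[of j a' a']])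
       (auto simp: hS_def zE_def indicator_def)
  have i2: "integrable M (\<lambda>\<omega>. hS \<omega> * zE \<omega> * muC \<omega>)"
  proof (rule integrable_const_bound[where B="real n"])
    show "AE x in M. norm (hS x * zE x * muC x) \<le> real n"
    proof (rule AE_I2)
      fix x show "norm (hS x * zE x * muC x) \<le> real n"
        using hSb[of x] by (auto simp: zE_def abs_le_iff)
    qed
  qed measurable
  have B_FADC: "B \<in> sets (FADC j)"
  proof -
    have "{a'} \<times> {d} \<times> (S \<inter> SK) \<in> sets (count_space UNIV \<Otimes>\<^sub>M count_space UNIV \<Otimes>\<^sub>M MC)"
      by (intro pair_measureI) auto
    then have "(\<lambda>\<omega>. (A \<omega>, D \<omega> j, Cv \<omega>)) -` ({a'} \<times> {d} \<times> (S \<inter> SK)) \<inter> space M \<in> sets (FADC j)"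
      by (rule in_vimage_algebra)
    moreover have "(\<lambda>\<omega>. (A \<omega>, D \<omega> j, Cv \<omega>)) -` ({a'} \<times> {d} \<times> (S \<inter> SK)) \<inter> space M = B"
      unfolding B_def by auto
    ultimately show ?thesis by simp
  qed
  have BM[measurable]: "B \<in> sets M" using B_FADC FADC.subalg unfolding subalgebra_def by auto
  have iBY: "integrable M (\<lambda>\<omega>. indicator B \<omega> * IY j \<omega>)"
    by (rule Bochner_Integration.integrable_bound[OF IY_int[of j]]) (auto simp: indicator_def)
  have e1: "(\<integral>\<omega>. iA \<omega> * (hS \<omega> * zE \<omega> * Xc a' a' j \<omega>) \<partial>M) = piA a' * (\<integral>\<omega>. hS \<omega> * zE \<omega> * Xc a' a' j \<omega> \<partial>M)"
    unfolding iA_def by (rule indep_rv_integral[OF A_indep _ i1]) (use hSFT zEFT XFT in measurable)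
  have e2: "(\<integral>\<omega>. iA \<omega> * (hS \<omega> * zE \<omega> * muC \<omega>) \<partial>M) = piA a' * (\<integral>\<omega>. hS \<omega> * zE \<omega> * muC \<omega> \<partial>M)"
    unfolding iA_def by (rule indep_rv_integral[OF A_indep _ i2]) (use hSFT zEFT muCFT in measurable)
  have s1: "(\<integral>\<omega>. iA \<omega> * (hS \<omega> * zE \<omega> * Xc a' a' j \<omega>) \<partial>M) = (\<integral>\<omega>. indicator B \<omega> * IY j \<omega> \<partial>M)"
  proof (rule integral_cong_AE)
    show "AE x in M. iA x * (hS x * zE x * Xc a' a' j x) = indicator B x * IY j x"
      using cons_D cons_Y AE_space
    proof eventually_elim
      case (elim x)
      show ?case
      proof (cases "A x = a' \<and> Cv x \<in> S \<inter> SK")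
        case True
        then have jN: "j < N x" using elim N_def by (auto simp: SK_def)
        then show ?thesis using True elim
          by (auto simp: iA_def hS_def zE_def B_def indicator_def)
      next
        case False
        then show ?thesis by (auto simp: iA_def hS_def B_def indicator_def)
      qed
    qed
  qed measurable
  have s2: "(\<integral>\<omega>. indicator B \<omega> * IY j \<omega> \<partial>M) = (\<integral>\<omega>. indicator B \<omega> * real_cond_exp M (FADC j) (IY j) \<omega> \<partial>M)"
    by (rule FADC.real_cond_exp_intg(2)[symmetric, OF iBY]) (use B_FADC in auto)
  have s3: "(\<integral>\<omega>. indicator B \<omega> * real_cond_exp M (FADC j) (IY j) \<omega> \<partial>M) = (\<integral>\<omega>. iA \<omega> * (hS \<omega> * zE \<omega> * muC \<omega>) \<partial>M)"
  proof (rule integral_cong_AE)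
    show "AE x in M. indicator B x * real_cond_exp M (FADC j) (IY j) x = iA x * (hS x * zE x * muC x)"
      using cons_D mu_version[rule_format, of j] AE_space
    proof eventually_elim
      case (elim x)
      show ?case
      proof (cases "A x = a' \<and> Cv x \<in> S \<inter> SK")
        case True
        then have jN: "j < N x" using elim N_def by (auto simp: SK_def)
        then show ?thesis using True elim
          by (auto simp: iA_def hS_def zE_def muC_def B_def indicator_def)
      next
        case False
        then show ?thesis by (auto simp: iA_def hS_def B_def indicator_def)
      qed
    qed
    show "(\<lambda>x. indicator B x * real_cond_exp M (FADC j) (IY j) x) \<in> borel_measurable M"
      using FADC.subalg unfolding subalgebra_def by measurable
  qed measurable
  have "piA a' * (\<integral>\<omega>. hS \<omega> * zE \<omega> * Xc a' a' j \<omega> \<partial>M) = (\<integral>\<omega>. iA \<omega> * (hS \<omega> * zE \<omega> * Xc a' a' j \<omega>) \<partial>M)"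
    using e1 by simp
  also have "\<dots> = (\<integral>\<omega>. indicator B \<omega> * IY j \<omega> \<partial>M)" by (rule s1)
  also have "\<dots> = (\<integral>\<omega>. indicator B \<omega> * real_cond_exp M (FADC j) (IY j) \<omega> \<partial>M)" by (rule s2)
  also have "\<dots> = (\<integral>\<omega>. iA \<omega> * (hS \<omega> * zE \<omega> * muC \<omega>) \<partial>M)" by (rule s3)
  also have "\<dots> = piA a' * (\<integral>\<omega>. hS \<omega> * zE \<omega> * muC \<omega> \<partial>M)" by (rule e2)
  finally have "piA a' * (\<integral>\<omega>. hS \<omega> * zE \<omega> * Xc a' a' j \<omega> \<partial>M) = piA a' * (\<integral>\<omega>. hS \<omega> * zE \<omega> * muC \<omega> \<partial>M)" .
  then have "(\<integral>\<omega>. hS \<omega> * zE \<omega> * Xc a' a' j \<omega> \<partial>M) = (\<integral>\<omega>. hS \<omega> * zE \<omega> * muC \<omega> \<partial>M)"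
    using piA_pos[of a'] by simp
  then show ?thesis unfolding hS_def zE_def muC_def by (simp add: mult_ac)
qed

end


context thm1
begin

lemma stratum_UNIV: "(UNIV :: stratum set) = {At, Co, Nt, De}"
  using stratum.exhaust by auto

lemma GS_meas: "(\<lambda>\<omega>. GS j \<omega>) \<in> measurable M (count_space UNIV)"
proof -
  have c: "countable (UNIV :: stratum set)" unfolding stratum_UNIV by simp
  have s: "(\<lambda>\<omega>. GS j \<omega>) -` {s} \<inter> space M \<in> sets M" for s
  proof -
    have "{\<omega>\<in>space M. GS j \<omega> = s} \<in> sets M"
      by (cases s) (simp_all add: stratum_eqs, measurable)
    moreover have "(\<lambda>\<omega>. GS j \<omega>) -` {s} \<inter> space M = {\<omega>\<in>space M. GS j \<omega> = s}" by auto
    ultimately show ?thesis by simp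
  qed
  show ?thesis unfolding measurable_count_space_eq_countable[OF c] using s by auto
qed

lemma CI:
  "AE \<omega> in M. real_cond_exp M FF (\<lambda>\<omega>. Xc a' b j \<omega> * (if GS j \<omega> \<in> E then 1 else 0)) \<omega>
     = real_cond_exp M FF (Xc a' b j) \<omega> * real_cond_exp M FF (\<lambda>\<omega>. if GS j \<omega> \<in> E then 1 else 0) \<omega>"
proof -
  have ci: "cond_indep M FF (Xc a' b j) borel (\<lambda>\<omega>. GS j \<omega>) (count_space UNIV)"
    using ignorability by blast
  show ?thesis
    by (rule ci_ext[OF sfs_FF ci Xc_meas Xc_int GS_meas]) simp
qed

lemma cI: "AE \<omega> in M. real_cond_exp M FF (\<lambda>\<omega>. if j < N \<omega> then 1 else 0) \<omega> = Ione j \<omega>"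
proof -
  interpret FFs: sigma_finite_subalgebra M FF by (rule sfs_FF)
  have "AE \<omega> in M. real_cond_exp M FF (\<lambda>\<omega>. if j < N \<omega> then 1 else 0) \<omega> = real_cond_exp M FF (Ione j) \<omega>"
    by (rule FFs.real_cond_exp_cong) (auto simp: N_def)
  moreover have "AE \<omega> in M. real_cond_exp M FF (Ione j) \<omega> = Ione j \<omega>"
    by (rule FFs.real_cond_exp_F_meas[OF _ Ione_FF])
       (rule integrable_const_bound[where B=1], auto)
  ultimately show ?thesis by eventually_elim simp
qed

lemma q_d:
  "AE \<omega> in M. j < N \<omega> \<longrightarrow>
     real_cond_exp M FF (\<lambda>\<omega>. if GS j \<omega> \<in> {s. dproj a' s = d} then 1 else 0) \<omega>
       = (if d then p a' j (Cv \<omega>) else 1 - p a' j (Cv \<omega>))"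
proof -
  interpret FFs: sigma_finite_subalgebra M FF by (rule sfs_FF)
  define zE :: "'w \<Rightarrow> real" where "zE = (\<lambda>\<omega>. if GS j \<omega> \<in> {s. dproj a' s = d} then 1 else 0)"
  define fa :: "'w \<Rightarrow> real" where "fa = (\<lambda>\<omega>. if j < N \<omega> \<and> Dp \<omega> a' j then 1 else 0)"
  define fI :: "'w \<Rightarrow> real" where "fI = (\<lambda>\<omega>. if j < N \<omega> then 1 else 0)"
  have zEm: "zE \<in> borel_measurable M" unfolding zE_def dproj_GS by measurable
  have zEi: "integrable M zE" by (rule integrable_const_bound[where B=1]) (auto simp: zE_def intro: zEm[unfolded zE_def])
  have fam[measurable]: "fa \<in> borel_measurable M" unfolding fa_def by measurable
  have fIm[measurable]: "fI \<in> borel_measurable M" unfolding fI_def by measurable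
  have fai: "integrable M fa" by (rule integrable_const_bound[where B=1]) (auto simp: fa_def)
  have fIi: "integrable M fI" by (rule integrable_const_bound[where B=1]) (auto simp: fI_def)
  have eq: "(\<lambda>\<omega>. if j < N \<omega> then zE \<omega> else 0) = (if d then fa else (\<lambda>\<omega>. fI \<omega> - fa \<omega>))"
    by (cases d) (auto simp: zE_def fa_def fI_def dproj_GS fun_eq_iff)
  have 1: "AE \<omega> in M. j < N \<omega> \<longrightarrow> real_cond_exp M FF zE \<omega> = real_cond_exp M FF (\<lambda>\<omega>. if j < N \<omega> then zE \<omega> else 0) \<omega>"
    by (rule cexp_I[OF zEm zEi])
  have 2: "AE \<omega> in M. real_cond_exp M FF (\<lambda>\<omega>. fI \<omega> - fa \<omega>) \<omega> = real_cond_exp M FF fI \<omega> - real_cond_exp M FF fa \<omega>"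
    by (rule FFs.real_cond_exp_diff[OF fIi fai])
  show ?thesis
    using 1 2 QA[of j a'] cI[of j] AE_space
  proof eventually_elim
    case (elim \<omega>)
    then show ?case unfolding zE_def[symmetric] eq
      by (cases d) (auto simp: fa_def fI_def N_def)
  qed
qed

lemma q_g:
  assumes "g' \<noteq> De"
  shows "AE \<omega> in M. j < N \<omega> \<longrightarrow>
     real_cond_exp M FF (\<lambda>\<omega>. if GS j \<omega> \<in> {g'} then 1 else 0) \<omega> = escore p g' j (Cv \<omega>)"
proof -
  define zE :: "'w \<Rightarrow> real" where "zE = (\<lambda>\<omega>. if GS j \<omega> \<in> {g'} then 1 else 0)"
  have zEm: "zE \<in> borel_measurable M" unfolding zE_def by (cases g') (simp_all add: stratum_eqs, measurable)
  have zEi: "integrable M zE" by (rule integrable_const_bound[where B=1]) (auto simp: zE_def intro: zEm[unfolded zE_def])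
  have eq: "(\<lambda>\<omega>. if j < N \<omega> then zE \<omega> else 0) = (\<lambda>\<omega>. if j < N \<omega> \<and> GS j \<omega> = g' then 1 else 0)"
    by (auto simp: zE_def fun_eq_iff)
  show ?thesis
    using cexp_I[OF zEm zEi, of j] part1_j[OF assms, of j]
    unfolding eq zE_def[symmetric] by eventually_elim auto
qed

lemma Z0:
  fixes \<psi> :: "'w \<Rightarrow> real"
  assumes psm: "\<psi> \<in> borel_measurable FF" and psi: "integrable M \<psi>"
    and z: "\<And>S. S \<in> sets MC \<Longrightarrow> (\<integral>\<omega>. indicator {\<omega>\<in>space M. Cv \<omega> \<in> S} \<omega> * \<psi> \<omega> \<partial>M) = 0"
  shows "AE \<omega> in M. \<psi> \<omega> = 0"
proof -
  interpret FFs: sigma_finite_subalgebra M FF by (rule sfs_FF)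
  have 1: "AE \<omega> in M. real_cond_exp M FF \<psi> \<omega> = \<psi> \<omega>"
    by (rule FFs.real_cond_exp_F_meas[OF psi psm])
  have 2: "AE \<omega> in M. real_cond_exp M FF \<psi> \<omega> = (\<lambda>_. 0) \<omega>"
  proof (rule FFs.real_cond_exp_charact)
    fix A' assume "A' \<in> sets FF"
    then obtain S where S: "S \<in> sets MC" and A': "A' = {\<omega>\<in>space M. Cv \<omega> \<in> S}"
      unfolding FF_sets by auto
    show "(\<integral>\<omega>\<in>A'. \<psi> \<omega> \<partial>M) = (\<integral>\<omega>\<in>A'. 0 \<partial>M)"
      unfolding set_lebesgue_integral_def A' using z[OF S] by simp
  qed (auto simp: psi)
  show ?thesis using 1 2 by eventually_elim simp
qed

end


context thm1
begin

lemma K: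
  fixes a' d :: bool and j :: nat
  assumes pos: "AE \<omega> in M. j < N \<omega> \<longrightarrow> 0 < (if d then p a' j (Cv \<omega>) else 1 - p a' j (Cv \<omega>))"
  shows "AE \<omega> in M. j < N \<omega> \<longrightarrow> real_cond_exp M FF (Xc a' a' j) \<omega> = mu a' d j (Cv \<omega>)"
proof -
  interpret FFs: sigma_finite_subalgebra M FF by (rule sfs_FF)
  define X where "X = Xc a' a' j"
  define zE :: "'w \<Rightarrow> real" where "zE = (\<lambda>\<omega>. if GS j \<omega> \<in> {s. dproj a' s = d} then 1 else 0)"
  have zE_eq: "zE \<omega> = (if Dp \<omega> a' j = d then 1 else 0)" for \<omega> by (cases a') (auto simp: zE_def dproj_GS)
  define q where "q = real_cond_exp M FF zE"
  define cX where "cX = real_cond_exp M FF X"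
  define muC where "muC = (\<lambda>\<omega>. mu a' d j (Cv \<omega>))"
  define SK where "SK n = {c\<in>space MC. j < cN c \<and> \<bar>mu a' d j c\<bar> \<le> real n}" for n :: nat
  define psi where "psi n = (\<lambda>\<omega>. indicator {\<omega>\<in>space M. Cv \<omega> \<in> SK n} \<omega> * q \<omega> * (cX \<omega> - muC \<omega>))" for n
  have SKm[measurable]: "SK n \<in> sets MC" for n unfolding SK_def by measurable
  have Xm[measurable]: "X \<in> borel_measurable M" unfolding X_def by (rule Xc_meas)
  have Xi: "integrable M X" unfolding X_def by (rule Xc_int)
  have zEm[measurable]: "zE \<in> borel_measurable M" unfolding zE_eq[abs_def] by measurable
  have zEi: "integrable M zE" by (rule integrable_const_bound[where B=1]) (auto simp: zE_eq)
  have qb: "AE \<omega> in M. 0 \<le> q \<omega> \<and> q \<omega> \<le> 1"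
    unfolding q_def by (rule cexp_bounds01[OF sfs_FF zEm]) (auto simp: zE_eq)
  have qFF: "q \<in> borel_measurable FF" unfolding q_def by simp
  have cXFF: "cX \<in> borel_measurable FF" unfolding cX_def by simp
  have muCFF: "muC \<in> borel_measurable FF"
    unfolding muC_def using measurable_compose[OF FF_Cv_meas mu_meas'[of a' d j]] by simp
  have qm[measurable]: "q \<in> borel_measurable M" unfolding q_def by simp
  have cXm[measurable]: "cX \<in> borel_measurable M" unfolding cX_def by simp
  have muCm[measurable]: "muC \<in> borel_measurable M" unfolding muC_def by measurable
  have cXi: "integrable M cX" unfolding cX_def by (rule FFs.real_cond_exp_int(1)[OF Xi])
  have ci: "AE \<omega> in M. real_cond_exp M FF (\<lambda>\<omega>. X \<omega> * zE \<omega>) \<omega> = cX \<omega> * q \<omega>"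
    using CI[of j a' a' "{s. dproj a' s = d}"] unfolding X_def zE_def cX_def q_def .
  have hSFF: "indicator {\<omega>\<in>space M. Cv \<omega> \<in> S} \<in> borel_measurable FF" if "S \<in> sets MC" for S
    by (rule borel_measurable_indicator, rule FF_C_set[OF that])
  have psi0: "AE \<omega> in M. psi n \<omega> = 0" for n
  proof (rule Z0)
    show "psi n \<in> borel_measurable FF"
      unfolding psi_def using hSFF[OF SKm[of n]] qFF cXFF muCFF
      by (intro borel_measurable_times borel_measurable_diff) auto
    have pm: "psi n \<in> borel_measurable M" unfolding psi_def by measurable
    show "integrable M (psi n)"
    proof (rule Bochner_Integration.integrable_bound[OF _ pm])
      show "integrable M (\<lambda>\<omega>. \<bar>cX \<omega>\<bar> + real n)" using cXi by simp
      show "AE x in M. norm (psi n x) \<le> norm (\<bar>cX x\<bar> + real n)"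
        using qb
      proof eventually_elim
        case (elim x)
        have "norm (psi n x) \<le> \<bar>cX x - muC x\<bar> * indicator {\<omega>\<in>space M. Cv \<omega> \<in> SK n} x"
          using elim unfolding psi_def
          by (auto simp: abs_mult indicator_def intro!: mult_left_le_one_le)
        also have "\<dots> \<le> \<bar>cX x\<bar> + real n"
          by (auto simp: indicator_def SK_def muC_def)
        finally show ?case by simp
      qed
    qed
  next
    fix S assume S[measurable]: "S \<in> sets MC"
    define hS :: "'w \<Rightarrow> real" where "hS = indicator {\<omega>\<in>space M. Cv \<omega> \<in> S \<inter> SK n}"
    have hSm[measurable]: "hS \<in> borel_measurable M" unfolding hS_def by measurable
    have hS_FF: "hS \<in> borel_measurable FF" unfolding hS_def by (rule hSFF) measurable
    have hSb: "\<bar>hS \<omega> * muC \<omega>\<bar> \<le> real n" for \<omega>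
      by (auto simp: hS_def muC_def SK_def indicator_def)
    have ind: "indicator {\<omega>\<in>space M. Cv \<omega> \<in> S} \<omega> * psi n \<omega> = hS \<omega> * q \<omega> * cX \<omega> - (hS \<omega> * muC \<omega>) * q \<omega>" for \<omega>
      by (auto simp: psi_def hS_def indicator_def algebra_simps)
    have i1: "integrable M (\<lambda>\<omega>. hS \<omega> * q \<omega> * cX \<omega>)"
    proof (rule Bochner_Integration.integrable_bound[OF cXi])
      show "AE x in M. norm (hS x * q x * cX x) \<le> norm (cX x)"
        using qb by eventually_elim (auto simp: hS_def indicator_def abs_mult intro!: mult_left_le_one_le)
    qed measurable
    have i2: "integrable M (\<lambda>\<omega>. (hS \<omega> * muC \<omega>) * q \<omega>)"
    proof (rule integrable_const_bound[where B="real n"])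
      show "AE x in M. norm (hS x * muC x * q x) \<le> real n"
        using qb
      proof eventually_elim
        case (elim x)
        have "\<bar>hS x * muC x * q x\<bar> \<le> \<bar>hS x * muC x\<bar>"
          using elim by (auto simp: abs_mult intro!: mult_right_le_one_le)
        then show ?case using hSb[of x] by simp
      qed
    qed measurable
    have iXz: "integrable M (\<lambda>\<omega>. hS \<omega> * (X \<omega> * zE \<omega>))"
      by (rule Bochner_Integration.integrable_bound[OF Xi]) (auto simp: hS_def indicator_def zE_eq)
    have izm: "integrable M (\<lambda>\<omega>. (hS \<omega> * muC \<omega>) * zE \<omega>)"
      by (rule integrable_const_bound[where B="real n"]) (use hSb in \<open>auto simp: zE_eq abs_mult\<close>)
    have "(\<integral>\<omega>. hS \<omega> * q \<omega> * cX \<omega> \<partial>M) = (\<integral>\<omega>. hS \<omega> * real_cond_exp M FF (\<lambda>\<omega>. X \<omega> * zE \<omega>) \<omega> \<partial>M)"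
      by (rule integral_cong_AE) (use ci in \<open>auto simp: mult_ac\<close>)
    also have "\<dots> = (\<integral>\<omega>. hS \<omega> * (X \<omega> * zE \<omega>) \<partial>M)"
      by (rule FFs.real_cond_exp_intg(2)[OF iXz hS_FF]) measurable
    also have "\<dots> = (\<integral>\<omega>. (hS \<omega> * muC \<omega>) * zE \<omega> \<partial>M)"
      using K_int[OF S, where j=j and a'=a' and d=d and n=n] unfolding hS_def SK_def muC_def X_def
      by (simp add: zE_eq mult_ac)
    also have "\<dots> = (\<integral>\<omega>. (hS \<omega> * muC \<omega>) * q \<omega> \<partial>M)"
      unfolding q_def
      by (rule FFs.real_cond_exp_intg(2)[symmetric, OF izm]) (use hS_FF muCFF in measurable)
    finally have "(\<integral>\<omega>. hS \<omega> * q \<omega> * cX \<omega> \<partial>M) = (\<integral>\<omega>. (hS \<omega> * muC \<omega>) * q \<omega> \<partial>M)" .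
    then show "(\<integral>\<omega>. indicator {\<omega>\<in>space M. Cv \<omega> \<in> S} \<omega> * psi n \<omega> \<partial>M) = 0"
      unfolding ind by (subst Bochner_Integration.integral_diff[OF i1 i2]) simp
  qed
  have all0: "AE \<omega> in M. \<forall>n. psi n \<omega> = 0"
    using psi0 by (simp add: AE_all_countable)
  have qpos: "AE \<omega> in M. j < N \<omega> \<longrightarrow> q \<omega> > 0"
    using q_d[of j a' d] pos unfolding q_def zE_def by eventually_elim auto
  show ?thesis
    using all0 qpos AE_space
  proof eventually_elim
    case (elim \<omega>)
    show ?case
    proof
      assume jN: "j < N \<omega>"
      define n where "n = nat \<lceil>\<bar>muC \<omega>\<bar>\<rceil>"
      have "Cv \<omega> \<in> SK n"
        using jN elim measurable_space[OF Cv_meas, of \<omega>] N_def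
        unfolding SK_def n_def muC_def by (auto intro: real_nat_ceiling_ge)
      then have "q \<omega> * (cX \<omega> - muC \<omega>) = 0" using elim(1)[rule_format, of n] elim(3)
        by (simp add: psi_def indicator_def)
      then show "real_cond_exp M FF (Xc a' a' j) \<omega> = mu a' d j (Cv \<omega>)"
        using elim(2) jN unfolding cX_def X_def muC_def by simp
    qed
  qed
qed

end


context thm1
begin

definition phiC :: "'c \<Rightarrow> real" where "phiC c = w (cN c) (cV c) / real (cN c)"

lemma phiC_meas[measurable]: "phiC \<in> borel_measurable MC"
proof -
  have "(\<lambda>c. (\<lambda>(n, v). w n v) (cN c, cV c)) \<in> borel_measurable MC"
    by (rule measurable_compose[OF measurable_Pair[OF cN_meas cV_meas] w_meas])
  then have "(\<lambda>c. w (cN c) (cV c)) \<in> borel_measurable MC" by simp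
  moreover have "(\<lambda>c. real (cN c)) \<in> borel_measurable MC" by measurable
  ultimately show ?thesis unfolding phiC_def[abs_def] by (rule borel_measurable_divide)
qed

lemma phiFF: "(\<lambda>\<omega>. phiC (Cv \<omega>) * Ione j \<omega>) \<in> borel_measurable FF"
proof -
  have "(\<lambda>c. phiC c * (if j < cN c then 1 else 0)) \<in> borel_measurable MC" by measurable
  from measurable_compose[OF FF_Cv_meas this] show ?thesis by simp
qed

lemma sum_upto_If:
  fixes n m :: nat
  assumes "n \<le> m"
  shows "(\<Sum>j<m. if j < n then f j else (0::real)) = (\<Sum>j<n. f j)"
proof -
  have "(\<Sum>j<m. if j < n then f j else (0::real)) = (\<Sum>j\<in>{j\<in>{..<m}. j < n}. f j)"
    by (rule sum.inter_filter[symmetric]) simp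
  also have "{j\<in>{..<m}. j < n} = {..<n}" using assms by auto
  finally show ?thesis .
qed

lemma int_sum_j:
  fixes F G :: "nat \<Rightarrow> 'w \<Rightarrow> real"
  assumes Fm: "\<And>j. F j \<in> borel_measurable M" and Gm: "\<And>j. G j \<in> borel_measurable M"
    and Fint: "\<And>j. integrable M (\<lambda>\<omega>. (phiC (Cv \<omega>) * Ione j \<omega>) * F j \<omega>)"
    and eq: "\<And>j. AE \<omega> in M. j < N \<omega> \<longrightarrow> real_cond_exp M FF (F j) \<omega> = G j \<omega>"
  shows "(\<integral>\<omega>. WW \<omega> / real (N \<omega>) * (\<Sum>j<N \<omega>. F j \<omega>) \<partial>M)
       = (\<integral>\<omega>. WW \<omega> / real (N \<omega>) * (\<Sum>j<N \<omega>. G j \<omega>) \<partial>M)"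
proof -
  interpret FFs: sigma_finite_subalgebra M FF by (rule sfs_FF)
  obtain Nmax where Nm: "AE \<omega> in M. 1 \<le> N \<omega> \<and> N \<omega> \<le> Nmax" by (rule Nmax_ex)
  have phim[measurable]: "(\<lambda>\<omega>. phiC (Cv \<omega>) * Ione j \<omega>) \<in> borel_measurable M" for j by measurable
  note Fm[measurable] Gm[measurable]
  have rew: "AE \<omega> in M. WW \<omega> / real (N \<omega>) * (\<Sum>j<N \<omega>. H j \<omega>) = (\<Sum>j<Nmax. (phiC (Cv \<omega>) * Ione j \<omega>) * H j \<omega>)"
    for H :: "nat \<Rightarrow> 'w \<Rightarrow> real"
    using Nm AE_space
  proof eventually_elim
    case (elim \<omega>)
    have "(\<Sum>j<Nmax. (phiC (Cv \<omega>) * Ione j \<omega>) * H j \<omega>) = (\<Sum>j<Nmax. if j < N \<omega> then phiC (Cv \<omega>) * H j \<omega> else 0)"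
      using elim by (intro sum.cong) (auto simp: N_def)
    also have "\<dots> = (\<Sum>j<N \<omega>. phiC (Cv \<omega>) * H j \<omega>)" using elim by (intro sum_upto_If) simp
    also have "\<dots> = WW \<omega> / real (N \<omega>) * (\<Sum>j<N \<omega>. H j \<omega>)"
      using elim by (simp add: sum_distrib_left phiC_def N_def V_def)
    finally show ?case by simp
  qed
  have rewG: "AE \<omega> in M. (\<Sum>j<Nmax. (phiC (Cv \<omega>) * Ione j \<omega>) * G j \<omega>) = WW \<omega> / real (N \<omega>) * (\<Sum>j<N \<omega>. G j \<omega>)"
    using rew[of G] by eventually_elim simp
  have cint: "integrable M (\<lambda>\<omega>. (phiC (Cv \<omega>) * Ione j \<omega>) * real_cond_exp M FF (F j) \<omega>)"
    and cEq: "(\<integral>\<omega>. (phiC (Cv \<omega>) * Ione j \<omega>) * real_cond_exp M FF (F j) \<omega> \<partial>M)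
             = (\<integral>\<omega>. (phiC (Cv \<omega>) * Ione j \<omega>) * F j \<omega> \<partial>M)" for j
    using FFs.real_cond_exp_intg[OF Fint[of j] phiFF[of j] Fm[of j]] by auto
  have ae2: "AE \<omega> in M. (phiC (Cv \<omega>) * Ione j \<omega>) * real_cond_exp M FF (F j) \<omega> = (phiC (Cv \<omega>) * Ione j \<omega>) * G j \<omega>" for j
    using eq[of j] AE_space by eventually_elim (auto simp: N_def)
  have Gint: "integrable M (\<lambda>\<omega>. (phiC (Cv \<omega>) * Ione j \<omega>) * G j \<omega>)" for j
    using cint[of j] by (subst integrable_cong_AE[OF _ _ ae2[of j], symmetric]) measurable
  have "(\<integral>\<omega>. WW \<omega> / real (N \<omega>) * (\<Sum>j<N \<omega>. F j \<omega>) \<partial>M)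
      = (\<integral>\<omega>. (\<Sum>j<Nmax. (phiC (Cv \<omega>) * Ione j \<omega>) * F j \<omega>) \<partial>M)"
    by (rule integral_cong_AE[OF _ _ rew]) (use W_meas in measurable)
  also have "\<dots> = (\<Sum>j<Nmax. (\<integral>\<omega>. (phiC (Cv \<omega>) * Ione j \<omega>) * F j \<omega> \<partial>M))"
    by (rule Bochner_Integration.integral_sum) (rule Fint)
  also have "\<dots> = (\<Sum>j<Nmax. (\<integral>\<omega>. (phiC (Cv \<omega>) * Ione j \<omega>) * G j \<omega> \<partial>M))"
  proof (rule sum.cong[OF refl])
    fix j
    show "(\<integral>\<omega>. (phiC (Cv \<omega>) * Ione j \<omega>) * F j \<omega> \<partial>M) = (\<integral>\<omega>. (phiC (Cv \<omega>) * Ione j \<omega>) * G j \<omega> \<partial>M)"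
      using cEq[of j] integral_cong_AE[OF _ _ ae2[of j]] by simp
  qed
  also have "\<dots> = (\<integral>\<omega>. (\<Sum>j<Nmax. (phiC (Cv \<omega>) * Ione j \<omega>) * G j \<omega>) \<partial>M)"
    by (rule Bochner_Integration.integral_sum[symmetric]) (rule Gint)
  also have "\<dots> = (\<integral>\<omega>. WW \<omega> / real (N \<omega>) * (\<Sum>j<N \<omega>. G j \<omega>) \<partial>M)"
    by (rule integral_cong_AE[OF _ _ rewG]) (use W_meas in measurable)
  finally show ?thesis .
qed

end


context thm1
begin

lemma g_nDe: "g \<noteq> De" using adm by (auto simp: admissible_def split: if_splits)

lemma pos_dstar:
  "AE \<omega> in M. j < N \<omega> \<longrightarrow> 0 < (if dstar g astar then p a j (Cv \<omega>) else 1 - p a j (Cv \<omega>))"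
  using positivity
proof eventually_elim
  case (elim \<omega>)
  show ?case
  proof
    assume j: "j < N \<omega>"
    then have P: "0 < p True j (Cv \<omega>)" "p True j (Cv \<omega>) < 1" "p False j (Cv \<omega>) < 1"
        "\<not> strong \<longrightarrow> 0 < p False j (Cv \<omega>)"
      using elim by auto
    show "0 < (if dstar g astar then p a j (Cv \<omega>) else 1 - p a j (Cv \<omega>))"
      using adm P by (cases g; cases a; cases astar) (auto simp: admissible_def dstar_def split: if_splits)
  qed
qed

lemma pos_Nt: "AE \<omega> in M. j < N \<omega> \<longrightarrow> 0 < 1 - p True j (Cv \<omega>)"
  using positivity by eventually_elim auto

lemma cX_eq:
  "AE \<omega> in M. j < N \<omega> \<longrightarrow> real_cond_exp M FF (Xc a astar j) \<omega> = mu a (dstar g astar) j (Cv \<omega>)"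
proof (cases "astar = a")
  case True
  have k: "AE \<omega> in M. j < N \<omega> \<longrightarrow> real_cond_exp M FF (Xc a a j) \<omega> = mu a (dstar g astar) j (Cv \<omega>)"
    by (rule K[OF pos_dstar])
  show ?thesis using k unfolding True .
next
  case False
  then have aT: "a = True" and aF: "astar = False"
    using adm by (auto simp: admissible_def split: if_splits)
  have pw: "(\<lambda>\<omega>. Xc True False j \<omega> * (if GS j \<omega> \<in> {Nt} then 1 else 0))
      = (\<lambda>\<omega>. Xc True True j \<omega> * (if GS j \<omega> \<in> {Nt} then 1 else 0))"
  proof
    fix \<omega>
    show "Xc True False j \<omega> * (if GS j \<omega> \<in> {Nt} then 1 else 0) = Xc True True j \<omega> * (if GS j \<omega> \<in> {Nt} then 1 else 0)"
    proof (cases "GS j \<omega> = Nt")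
      case True
      then have "\<not> Dp \<omega> True j" "\<not> Dp \<omega> False j" by (auto simp: stratum_eqs)
      then have m: "map (\<lambda>k. if k = j then Dp \<omega> False k else Dp \<omega> True k) [0..<N \<omega>]
          = map (\<lambda>k. if k = j then Dp \<omega> True k else Dp \<omega> True k) [0..<N \<omega>]"
        by (intro map_cong) auto
      show ?thesis unfolding cf_outcome_def m by (rule refl)
    qed simp
  qed
  have qN: "AE \<omega> in M. j < N \<omega> \<longrightarrow> real_cond_exp M FF (\<lambda>\<omega>. if GS j \<omega> \<in> {Nt} then 1 else 0) \<omega> = escore p Nt j (Cv \<omega>)"
    by (rule q_g) simp
  show ?thesis
    using CI[of j True False "{Nt}"] CI[of j True True "{Nt}"] qN pos_Nt[of j]
      K[where a'=True and d="dstar g astar" and j=j, OF pos_dstar[unfolded aT]] AE_space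
    unfolding pw aT aF
  proof eventually_elim
    case (elim \<omega>)
    show ?case
    proof
      assume j: "j < N \<omega>"
      have qp: "real_cond_exp M FF (\<lambda>\<omega>. if GS j \<omega> \<in> {Nt} then 1 else 0) \<omega> > 0"
        using elim j by (simp add: escore_def)
      have "real_cond_exp M FF (Xc True False j) \<omega> * real_cond_exp M FF (\<lambda>\<omega>. if GS j \<omega> \<in> {Nt} then 1 else 0) \<omega>
          = real_cond_exp M FF (Xc True True j) \<omega> * real_cond_exp M FF (\<lambda>\<omega>. if GS j \<omega> \<in> {Nt} then 1 else 0) \<omega>"
        using elim by simp
      then have "real_cond_exp M FF (Xc True False j) \<omega> = real_cond_exp M FF (Xc True True j) \<omega>"
        using qp by simp
      then show "real_cond_exp M FF (Xc True False j) \<omega> = mu True (dstar g False) j (Cv \<omega>)"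
        using elim j by simp
    qed
  qed
qed

lemma NUM:
  "AE \<omega> in M. j < N \<omega> \<longrightarrow> real_cond_exp M FF (\<lambda>\<omega>. Xc a astar j \<omega> * (if GS j \<omega> \<in> {g} then 1 else 0)) \<omega>
      = escore p g j (Cv \<omega>) * mu a (dstar g astar) j (Cv \<omega>)"
  using CI[of j a astar "{g}"] cX_eq[of j] q_g[OF g_nDe, of j]
  by eventually_elim auto

end


context thm1
begin

lemma Fint_gen:
  fixes F :: "'w \<Rightarrow> real"
  assumes Fm: "F \<in> borel_measurable M" and gsq: "integrable M (\<lambda>\<omega>. (Gz \<omega>)\<^sup>2)"
    and b: "\<And>\<omega>. \<bar>F \<omega>\<bar> \<le> \<bar>Gz \<omega>\<bar>"
  shows "integrable M (\<lambda>\<omega>. (phiC (Cv \<omega>) * Ione j \<omega>) * F \<omega>)"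
proof -
  obtain Nmax where Nm: "AE \<omega> in M. 1 \<le> N \<omega> \<and> N \<omega> \<le> Nmax" by (rule Nmax_ex)
  show ?thesis
  proof (rule sq_bound_int[OF W_sq gsq])
    show "(\<lambda>\<omega>. (phiC (Cv \<omega>) * Ione j \<omega>) * F \<omega>) \<in> borel_measurable M" using Fm by measurable
    show "AE \<omega> in M. \<bar>phiC (Cv \<omega>) * Ione j \<omega> * F \<omega>\<bar> \<le> \<bar>WW \<omega> * Gz \<omega>\<bar>"
      using Nm AE_space
    proof eventually_elim
      case (elim \<omega>)
      have "\<bar>phiC (Cv \<omega>)\<bar> \<le> \<bar>WW \<omega>\<bar>"
      proof -
        have "phiC (Cv \<omega>) = WW \<omega> / real (N \<omega>)" using elim by (simp add: phiC_def N_def V_def)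
        moreover have "real (N \<omega>) \<ge> 1" using elim by simp
        ultimately have "\<bar>phiC (Cv \<omega>)\<bar> = \<bar>WW \<omega>\<bar> / real (N \<omega>)" by (simp add: abs_divide)
        also have "\<dots> \<le> \<bar>WW \<omega>\<bar> / 1"
          by (rule divide_left_mono) (use \<open>real (N \<omega>) \<ge> 1\<close> in auto)
        finally show ?thesis by simp
      qed
      moreover have "\<bar>Ione j \<omega>\<bar> \<le> 1" by simp
      ultimately have "\<bar>phiC (Cv \<omega>) * Ione j \<omega>\<bar> \<le> \<bar>WW \<omega>\<bar>"
        by (auto simp: abs_mult)
      then show ?case using b[of \<omega>]
        by (simp add: abs_mult mult_mono)
    qed
  qed
qed

theorem main:
  shows "(AE \<omega> in M. \<forall>j < N \<omega>.
            real_cond_exp M (vimage_algebra (space M) Cv MC)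
              (\<lambda>\<omega>. if j < N \<omega> \<and> stratum_of (Dp \<omega> True j) (Dp \<omega> False j) = g then 1 else 0) \<omega>
            = escore p g j (Cv \<omega>))
       \<and> (\<integral>\<omega>. w (N \<omega>) (V \<omega>) / real (N \<omega>) *
              (\<Sum>j<N \<omega>. (if stratum_of (Dp \<omega> True j) (Dp \<omega> False j) = g then 1 else 0)
                          * cf_outcome Dp Yp (N \<omega>) a astar \<omega> j) \<partial>M)
         / (\<integral>\<omega>. w (N \<omega>) (V \<omega>) / real (N \<omega>) *
              (\<Sum>j<N \<omega>. if stratum_of (Dp \<omega> True j) (Dp \<omega> False j) = g then 1 else 0) \<partial>M)
       = (\<integral>\<omega>. w (N \<omega>) (V \<omega>) / real (N \<omega>) *
              (\<Sum>j<N \<omega>. escore p g j (Cv \<omega>) * mu a (dstar g astar) j (Cv \<omega>)) \<partial>M)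
         / (\<integral>\<omega>. w (N \<omega>) (V \<omega>) / real (N \<omega>) *
              (\<Sum>j<N \<omega>. escore p g j (Cv \<omega>)) \<partial>M)"
proof (intro conjI)
  have "AE \<omega> in M. \<forall>j. j < N \<omega> \<longrightarrow>
            real_cond_exp M FF
              (\<lambda>\<omega>. if j < N \<omega> \<and> stratum_of (Dp \<omega> True j) (Dp \<omega> False j) = g then 1 else 0) \<omega>
            = escore p g j (Cv \<omega>)"
    using part1_j[OF g_nDe] by (simp add: AE_all_countable)
  then show "AE \<omega> in M. \<forall>j < N \<omega>.
            real_cond_exp M FF
              (\<lambda>\<omega>. if j < N \<omega> \<and> stratum_of (Dp \<omega> True j) (Dp \<omega> False j) = g then 1 else 0) \<omega>
            = escore p g j (Cv \<omega>)" by simp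
next
  have num: "(\<integral>\<omega>. w (N \<omega>) (V \<omega>) / real (N \<omega>) *
              (\<Sum>j<N \<omega>. (if stratum_of (Dp \<omega> True j) (Dp \<omega> False j) = g then 1 else 0)
                          * cf_outcome Dp Yp (N \<omega>) a astar \<omega> j) \<partial>M)
       = (\<integral>\<omega>. w (N \<omega>) (V \<omega>) / real (N \<omega>) *
              (\<Sum>j<N \<omega>. escore p g j (Cv \<omega>) * mu a (dstar g astar) j (Cv \<omega>)) \<partial>M)"
  proof -
    have "(\<integral>\<omega>. w (N \<omega>) (V \<omega>) / real (N \<omega>) *
              (\<Sum>j<N \<omega>. (if stratum_of (Dp \<omega> True j) (Dp \<omega> False j) = g then 1 else 0)
                          * cf_outcome Dp Yp (N \<omega>) a astar \<omega> j) \<partial>M)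
        = (\<integral>\<omega>. w (N \<omega>) (V \<omega>) / real (N \<omega>) *
              (\<Sum>j<N \<omega>. Xc a astar j \<omega> * (if GS j \<omega> \<in> {g} then 1 else 0)) \<partial>M)"
      by (rule Bochner_Integration.integral_cong[OF refl]) (auto intro!: sum.cong)
    also have "\<dots> = (\<integral>\<omega>. w (N \<omega>) (V \<omega>) / real (N \<omega>) *
              (\<Sum>j<N \<omega>. escore p g j (Cv \<omega>) * mu a (dstar g astar) j (Cv \<omega>)) \<partial>M)"
    proof (rule int_sum_j)
      fix j
      have gi: "(\<lambda>\<omega>. if GS j \<omega> \<in> {g} then 1 else (0::real)) \<in> borel_measurable M"
        by (cases g) (simp_all add: stratum_eqs, measurable)
      have Fm: "(\<lambda>\<omega>. Xc a astar j \<omega> * (if GS j \<omega> \<in> {g} then 1 else 0)) \<in> borel_measurable M"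
        by (rule borel_measurable_times[OF Xc_meas gi])
      then show "(\<lambda>\<omega>. Xc a astar j \<omega> * (if GS j \<omega> \<in> {g} then 1 else 0)) \<in> borel_measurable M" .
      show "(\<lambda>\<omega>. escore p g j (Cv \<omega>) * mu a (dstar g astar) j (Cv \<omega>)) \<in> borel_measurable M"
        unfolding escore_def by (cases g) simp_all
      show "integrable M (\<lambda>\<omega>. (phiC (Cv \<omega>) * Ione j \<omega>) * (Xc a astar j \<omega> * (if GS j \<omega> \<in> {g} then 1 else 0)))"
        by (rule Fint_gen[OF Fm Xc_sq[of j a astar]]) (auto simp: abs_mult)
      show "AE \<omega> in M. j < N \<omega> \<longrightarrow> real_cond_exp M FF (\<lambda>\<omega>. Xc a astar j \<omega> * (if GS j \<omega> \<in> {g} then 1 else 0)) \<omega>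
          = escore p g j (Cv \<omega>) * mu a (dstar g astar) j (Cv \<omega>)"
        by (rule NUM)
    qed
    finally show ?thesis .
  qed
  have den: "(\<integral>\<omega>. w (N \<omega>) (V \<omega>) / real (N \<omega>) *
              (\<Sum>j<N \<omega>. if stratum_of (Dp \<omega> True j) (Dp \<omega> False j) = g then 1 else 0) \<partial>M)
       = (\<integral>\<omega>. w (N \<omega>) (V \<omega>) / real (N \<omega>) *
              (\<Sum>j<N \<omega>. escore p g j (Cv \<omega>)) \<partial>M)"
  proof -
    have "(\<integral>\<omega>. w (N \<omega>) (V \<omega>) / real (N \<omega>) *
              (\<Sum>j<N \<omega>. if stratum_of (Dp \<omega> True j) (Dp \<omega> False j) = g then 1 else 0) \<partial>M)
        = (\<integral>\<omega>. w (N \<omega>) (V \<omega>) / real (N \<omega>) *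
              (\<Sum>j<N \<omega>. (if j < N \<omega> \<and> GS j \<omega> = g then 1 else 0)) \<partial>M)"
      by (rule Bochner_Integration.integral_cong[OF refl]) (auto intro!: sum.cong)
    also have "\<dots> = (\<integral>\<omega>. w (N \<omega>) (V \<omega>) / real (N \<omega>) *
              (\<Sum>j<N \<omega>. escore p g j (Cv \<omega>)) \<partial>M)"
    proof (rule int_sum_j)
      fix j
      have Fm2: "(\<lambda>\<omega>. if j < N \<omega> \<and> GS j \<omega> = g then 1 else (0::real)) \<in> borel_measurable M"
        by (cases g) (simp_all add: stratum_eqs, measurable)
      then show "(\<lambda>\<omega>. if j < N \<omega> \<and> GS j \<omega> = g then 1 else (0::real)) \<in> borel_measurable M" .
      show "(\<lambda>\<omega>. escore p g j (Cv \<omega>)) \<in> borel_measurable M"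
        unfolding escore_def by (cases g) simp_all
      show "integrable M (\<lambda>\<omega>. (phiC (Cv \<omega>) * Ione j \<omega>) * (if j < N \<omega> \<and> GS j \<omega> = g then 1 else 0))"
        by (rule Fint_gen[OF Fm2, where Gz="\<lambda>_. 1"]) auto
      show "AE \<omega> in M. j < N \<omega> \<longrightarrow> real_cond_exp M FF (\<lambda>\<omega>. if j < N \<omega> \<and> GS j \<omega> = g then 1 else 0) \<omega>
          = escore p g j (Cv \<omega>)"
        by (rule part1_j[OF g_nDe])
    qed
    finally show ?thesis .
  qed
  show "(\<integral>\<omega>. w (N \<omega>) (V \<omega>) / real (N \<omega>) *
              (\<Sum>j<N \<omega>. (if stratum_of (Dp \<omega> True j) (Dp \<omega> False j) = g then 1 else 0)
                          * cf_outcome Dp Yp (N \<omega>) a astar \<omega> j) \<partial>M)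
         / (\<integral>\<omega>. w (N \<omega>) (V \<omega>) / real (N \<omega>) *
              (\<Sum>j<N \<omega>. if stratum_of (Dp \<omega> True j) (Dp \<omega> False j) = g then 1 else 0) \<partial>M)
       = (\<integral>\<omega>. w (N \<omega>) (V \<omega>) / real (N \<omega>) *
              (\<Sum>j<N \<omega>. escore p g j (Cv \<omega>) * mu a (dstar g astar) j (Cv \<omega>)) \<partial>M)
         / (\<integral>\<omega>. w (N \<omega>) (V \<omega>) / real (N \<omega>) *
              (\<Sum>j<N \<omega>. escore p g j (Cv \<omega>)) \<partial>M)"
    unfolding num den ..
qed

end


theorem theorem1:
  fixes M :: "'w measure" and MC :: "'c measure" and MV :: "'v measure"
    and Cv :: "'w \<Rightarrow> 'c" and cN :: "'c \<Rightarrow> nat" and cV :: "'c \<Rightarrow> 'v"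
    and N :: "'w \<Rightarrow> nat" and V :: "'w \<Rightarrow> 'v" and w :: "nat \<Rightarrow> 'v \<Rightarrow> real"
    and A :: "'w \<Rightarrow> bool" and \<pi> :: real
    and Dp :: "'w \<Rightarrow> bool \<Rightarrow> nat \<Rightarrow> bool"
    and Yp :: "'w \<Rightarrow> bool \<Rightarrow> nat \<Rightarrow> bool list \<Rightarrow> real"
    and D :: "'w \<Rightarrow> nat \<Rightarrow> bool" and Y :: "'w \<Rightarrow> nat \<Rightarrow> real"
    and strong :: bool
    and p :: "bool \<Rightarrow> nat \<Rightarrow> 'c \<Rightarrow> real"
    and mu :: "bool \<Rightarrow> bool \<Rightarrow> nat \<Rightarrow> 'c \<Rightarrow> real"
    and g :: stratum and a astar :: bool
  assumes prob: "prob_space M"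
    \<comment> \<open>covariates C = (X, V, N); N and V are functions of C, W = w(N, V)\<close>
    and Cv_meas: "Cv \<in> measurable M MC"
    and cN_meas: "cN \<in> measurable MC (count_space UNIV)"
    and cV_meas: "cV \<in> measurable MC MV"
    and N_def: "\<forall>\<omega>\<in>space M. N \<omega> = cN (Cv \<omega>)"
    and V_def: "\<forall>\<omega>\<in>space M. V \<omega> = cV (Cv \<omega>)"
    and w_meas: "(\<lambda>(n, v). w n v) \<in> borel_measurable (count_space UNIV \<Otimes>\<^sub>M MV)"
    and W_sq: "integrable M (\<lambda>\<omega>. (w (N \<omega>) (V \<omega>))\<^sup>2)"
    \<comment> \<open>super population: N has finite support in the positive integers\<close>
    and N_fin: "\<exists>Nmax. AE \<omega> in M. 1 \<le> N \<omega> \<and> N \<omega> \<le> Nmax"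
    \<comment> \<open>finite second moments of the potential outcomes\<close>
    and Yp_meas: "\<forall>a' j ds. (\<lambda>\<omega>. Yp \<omega> a' j ds) \<in> borel_measurable M"
    and Yp_sq: "\<forall>a' j ds. integrable M
                   (\<lambda>\<omega>. if j < N \<omega> \<and> length ds = N \<omega> then (Yp \<omega> a' j ds)\<^sup>2 else 0)"
    \<comment> \<open>observed variables\<close>
    and A_meas: "A \<in> measurable M (count_space UNIV)"
    and D_meas: "\<forall>j. (\<lambda>\<omega>. D \<omega> j) \<in> measurable M (count_space UNIV)"
    and Y_meas: "\<forall>j. (\<lambda>\<omega>. Y \<omega> j) \<in> borel_measurable M"
    \<comment> \<open>consistency\<close>
    and consistency: "AE \<omega> in M. \<forall>j < N \<omega>.
        D \<omega> j = Dp \<omega> (A \<omega>) j \<and> Y \<omega> j = Yp \<omega> (A \<omega>) j (map (D \<omega>) [0..<N \<omega>])"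
    \<comment> \<open>cluster randomization: A ~ Bernoulli(pi), independent of covariates and potential variables\<close>
    and pi_bounds: "0 < \<pi>" "\<pi> < 1"
    and A_bern: "measure M {\<omega> \<in> space M. A \<omega>} = \<pi>"
    and A_indep: "indep_rv M (count_space UNIV) A
        (MC \<Otimes>\<^sub>M (\<Pi>\<^sub>M i\<in>(UNIV :: (bool \<times> nat) set). count_space (UNIV :: bool set))
            \<Otimes>\<^sub>M (\<Pi>\<^sub>M i\<in>(UNIV :: (bool \<times> nat \<times> bool list) set). (borel :: real measure)))
        (\<lambda>\<omega>. (Cv \<omega>, (\<lambda>(a', k). Dp \<omega> a' k), (\<lambda>(a', j, ds). Yp \<omega> a' j ds)))"
    \<comment> \<open>monotonicity: standard (strong = False) or strong (strong = True)\<close>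
    and monotonicity: "AE \<omega> in M. \<forall>j < N \<omega>.
        (Dp \<omega> False j \<longrightarrow> Dp \<omega> True j) \<and> (strong \<longrightarrow> \<not> Dp \<omega> False j)"
    \<comment> \<open>extended principal ignorability\<close>
    and ignorability: "\<forall>a' a'' j. cond_indep M (vimage_algebra (space M) Cv MC)
        (\<lambda>\<omega>. if j < N \<omega> then cf_outcome Dp Yp (N \<omega>) a' a'' \<omega> j else 0) borel
        (\<lambda>\<omega>. stratum_of (Dp \<omega> True j) (Dp \<omega> False j)) (count_space UNIV)"
    \<comment> \<open>p a j C is a version of P(D_j = 1 | A = a, C)\<close>
    and p_meas: "\<forall>a' j. p a' j \<in> borel_measurable MC"
    and p_version: "\<forall>j. AE \<omega> in M. j < N \<omega> \<longrightarrow>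
        p (A \<omega>) j (Cv \<omega>) =
        real_cond_exp M (vimage_algebra (space M) (\<lambda>\<omega>. (A \<omega>, Cv \<omega>)) (count_space UNIV \<Otimes>\<^sub>M MC))
          (\<lambda>\<omega>. if j < N \<omega> \<and> D \<omega> j then 1 else 0) \<omega>"
    \<comment> \<open>mu a d j C is a version of E[Y_j | A = a, D_j = d, C]\<close>
    and mu_meas: "\<forall>a' d j. mu a' d j \<in> borel_measurable MC"
    and mu_version: "\<forall>j. AE \<omega> in M. j < N \<omega> \<longrightarrow>
        mu (A \<omega>) (D \<omega> j) j (Cv \<omega>) =
        real_cond_exp M (vimage_algebra (space M) (\<lambda>\<omega>. (A \<omega>, D \<omega> j, Cv \<omega>))
            (count_space UNIV \<Otimes>\<^sub>M count_space UNIV \<Otimes>\<^sub>M MC))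
          (\<lambda>\<omega>. if j < N \<omega> then Y \<omega> j else 0) \<omega>"
    \<comment> \<open>positivity\<close>
    and positivity: "AE \<omega> in M. \<forall>j < N \<omega>.
        0 < p True j (Cv \<omega>) \<and> p True j (Cv \<omega>) < 1 \<and> p False j (Cv \<omega>) < 1 \<and>
        (\<not> strong \<longrightarrow> 0 < p False j (Cv \<omega>))"
    \<comment> \<open>the estimand theta_g(a, a*) is defined\<close>
    and adm: "admissible strong g a astar"
  shows "(AE \<omega> in M. \<forall>j < N \<omega>.
            real_cond_exp M (vimage_algebra (space M) Cv MC)
              (\<lambda>\<omega>. if j < N \<omega> \<and> stratum_of (Dp \<omega> True j) (Dp \<omega> False j) = g then 1 else 0) \<omega>
            = escore p g j (Cv \<omega>))
       \<and> (\<integral>\<omega>. w (N \<omega>) (V \<omega>) / real (N \<omega>) *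
              (\<Sum>j<N \<omega>. (if stratum_of (Dp \<omega> True j) (Dp \<omega> False j) = g then 1 else 0)
                          * cf_outcome Dp Yp (N \<omega>) a astar \<omega> j) \<partial>M)
         / (\<integral>\<omega>. w (N \<omega>) (V \<omega>) / real (N \<omega>) *
              (\<Sum>j<N \<omega>. if stratum_of (Dp \<omega> True j) (Dp \<omega> False j) = g then 1 else 0) \<partial>M)
       = (\<integral>\<omega>. w (N \<omega>) (V \<omega>) / real (N \<omega>) *
              (\<Sum>j<N \<omega>. escore p g j (Cv \<omega>) * mu a (dstar g astar) j (Cv \<omega>)) \<partial>M)
         / (\<integral>\<omega>. w (N \<omega>) (V \<omega>) / real (N \<omega>) *
              (\<Sum>j<N \<omega>. escore p g j (Cv \<omega>)) \<partial>M)"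
proof -
  interpret thm1 M MC MV Cv cN cV N V w A \<pi> Dp Yp D Y strong p mu g a astar
    unfolding thm1_def thm1_axioms_def by (intro conjI) (fact assms)+
  show ?thesis by (rule main)
qed

end
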